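(* Let $\mathbb{K}$ be a field of characteristic $2$, let $r\in\{2,\dots,\min(n,p)\}$, and let $\mathcal{S}:=\mathrm{S}_r(\mathbb{K})\vee\mathrm{M}_{n-r,p-r}(\mathbb{K})\subset\mathrm{M}_{n,p}(\mathbb{K})$. Let $q\geq 1$. Then the range-preserving group homomorphisms $F:\mathcal{S}\to\mathrm{M}_{n,q}(\mathbb{K})$ are exactly the maps $$M\longmapsto\left(\begin{bmatrix}M & 0_{n\times(q-p)}\end{bmatrix}+\begin{bmatrix}0_{1\times r} & R(m_{1,1})\\ \vdots&\vdots\\ 0_{1\times r} & R(m_{r,r})\\ 0_{(n-r)\times r} & 0_{(n-r)\times(q-r)}\end{bmatrix}\right)Q,$$ where $Q\in\mathrm{GL}_q(\mathbb{K})$ and $R:\mathbb{K}\to\mathrm{M}_{1,q-r}(\mathbb{K})$ is root-linear.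
   Context: $\mathrm{S}_r(\mathbb{K})\vee\mathrm{M}_{n-r,p-r}(\mathbb{K})$ is the set of matrices $\begin{bmatrix}A&C\\0&B\end{bmatrix}$ with $A$ an $r\times r$ symmetric matrix, $B\in\mathrm{M}_{n-r,p-r}(\mathbb{K})$, $C\in\mathrm{M}_{r,p-r}(\mathbb{K})$ arbitrary. A map $F$ is range-preserving when the column space of $F(M)$ equals that of $M$ for all $M$. In characteristic $2$, a map $R$ between $\mathbb{K}$-vector spaces is root-linear when it is additive and $R(\lambda^2x)=\lambda R(x)$ for all $\lambda\in\mathbb{K}$ and all $x$. *)

theory Defs
  imports "Jordan_Normal_Form.Matrix"
begin

(* S_r(K) \<or> M_{n-r,p-r}(K): n x p matrices [A C; 0 B] with A an r x r symmetric block *)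
definition sym_vee_set :: "nat \<Rightarrow> nat \<Rightarrow> nat \<Rightarrow> 'a :: zero mat set" where
  "sym_vee_set r n p = {M \<in> carrier_mat n p.
      (\<forall>i<r. \<forall>j<r. M $$ (i, j) = M $$ (j, i)) \<and>
      (\<forall>i j. r \<le> i \<and> i < n \<and> j < r \<longrightarrow> M $$ (i, j) = 0)}"

definition col_space :: "'a :: semiring_0 mat \<Rightarrow> 'a vec set" where
  "col_space M = {M *\<^sub>v v | v. v \<in> carrier_vec (dim_col M)}"

definition range_preserving_on :: "'a :: semiring_0 mat set \<Rightarrow> ('a mat \<Rightarrow> 'a mat) \<Rightarrow> bool" where
  "range_preserving_on S F \<longleftrightarrow> (\<forall>M\<in>S. col_space (F M) = col_space M)"

definition root_linear :: "('a :: field \<Rightarrow> 'a vec) \<Rightarrow> bool" where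
  "root_linear R \<longleftrightarrow> (\<forall>x y. R (x + y) = R x + R y) \<and>
                      (\<forall>l x. R (l^2 * x) = l \<cdot>\<^sub>v R x)"

definition pad_cols :: "nat \<Rightarrow> 'a :: zero mat \<Rightarrow> 'a mat" where
  "pad_cols q M = mat (dim_row M) q (\<lambda>(i, j). if j < dim_col M then M $$ (i, j) else 0)"

definition root_corr :: "nat \<Rightarrow> nat \<Rightarrow> ('a :: zero \<Rightarrow> 'a vec) \<Rightarrow> 'a mat \<Rightarrow> 'a mat" where
  "root_corr r q R M = mat (dim_row M) q
     (\<lambda>(i, j). if i < r \<and> r \<le> j then R (M $$ (i, i)) $ (j - r) else 0)"

end

theory Submission
  imports Defs "Jordan_Normal_Form.VS_Connect"
begin

lemma col_space_mult_right_inv: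
  fixes X :: "'a::field mat"
  assumes X: "X \<in> carrier_mat n m" and T: "T \<in> carrier_mat m k" and T': "T' \<in> carrier_mat k m"
    and TT: "T * T' = 1\<^sub>m m"
  shows "col_space (X * T) = col_space X"
proof
  show "col_space (X * T) \<subseteq> col_space X"
  proof
    fix w assume "w \<in> col_space (X * T)"
    then obtain v where v: "v \<in> carrier_vec k" and w: "w = (X * T) *\<^sub>v v"
      using T unfolding col_space_def by auto
    have "w = X *\<^sub>v (T *\<^sub>v v)" using w X T v by simp
    moreover have "T *\<^sub>v v \<in> carrier_vec (dim_col X)" using T X v by simp
    ultimately show "w \<in> col_space X" unfolding col_space_def by blast
  qed
next
  show "col_space X \<subseteq> col_space (X * T)"
  proof
    fix w assume "w \<in> col_space X"
    then obtain v where v: "v \<in> carrier_vec m" and w: "w = X *\<^sub>v v"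
      using X unfolding col_space_def by auto
    have "X *\<^sub>v v = X *\<^sub>v ((T * T') *\<^sub>v v)" using TT v by simp
    also have "\<dots> = (X * T) *\<^sub>v (T' *\<^sub>v v)" using X T T' v
      by (metis assoc_mult_mat_vec mult_carrier_mat mult_mat_vec_carrier)
    finally have "w = (X * T) *\<^sub>v (T' *\<^sub>v v)" using w by simp
    moreover have "T' *\<^sub>v v \<in> carrier_vec (dim_col (X * T))" using T T' v by simp
    ultimately show "w \<in> col_space (X * T)" unfolding col_space_def by blast
  qed
qed

lemma col_ann:
  fixes A B :: "'a::field mat"
  assumes A: "A \<in> carrier_mat n a" and B: "B \<in> carrier_mat n b"
    and sub: "col_space A \<subseteq> col_space B"
    and y: "\<forall>k<b. (\<Sum>i<n. y i * B $$ (i,k)) = 0" and j: "j < a"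
  shows "(\<Sum>i<n. y i * A $$ (i,j)) = 0"
proof -
  have "A *\<^sub>v unit_vec a j \<in> col_space A" unfolding col_space_def using A by auto
  with sub obtain v where v: "v \<in> carrier_vec b" and eq: "A *\<^sub>v unit_vec a j = B *\<^sub>v v"
    using B unfolding col_space_def by auto
  have ent: "A $$ (i,j) = (\<Sum>k<b. B $$ (i,k) * v $ k)" if i: "i < n" for i
  proof -
    have "(A *\<^sub>v unit_vec a j) $ i = A $$ (i,j)"
      using A i j by (simp add: scalar_prod_right_unit)
    moreover have "(B *\<^sub>v v) $ i = (\<Sum>k<b. B $$ (i,k) * v $ k)"
      using B i v by (simp add: scalar_prod_def lessThan_atLeast0)
    ultimately show ?thesis using eq by simp
  qed
  have "(\<Sum>i<n. y i * A $$ (i,j)) = (\<Sum>i<n. \<Sum>k<b. y i * (B $$ (i,k) * v $ k))"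
    by (simp add: ent sum_distrib_left)
  also have "\<dots> = (\<Sum>k<b. (\<Sum>i<n. y i * B $$ (i,k)) * v $ k)"
    by (subst sum.swap) (simp add: sum_distrib_right mult.assoc)
  also have "\<dots> = 0" using y by simp
  finally show ?thesis .
qed

lemma char2_add_self: fixes x :: "'a::field" assumes "(2::'a) = 0" shows "x + x = 0"
proof - have "x + x = 2 * x" by simp then show ?thesis using assms by simp qed

lemma char2_neg: fixes x :: "'a::field" assumes "(2::'a) = 0" shows "- x = x"
  using char2_add_self[OF assms, of x] by (simp add: add_eq_0_iff2 eq_neg_iff_add_eq_0)

lemma char2_eq: fixes x y :: "'a::field" assumes "(2::'a) = 0" shows "x + y = 0 \<longleftrightarrow> x = y"
  using char2_neg[OF assms, of y] by (metis add_eq_0_iff2)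

lemma char2_sq_add: fixes x y :: "'a::field" assumes "(2::'a) = 0" shows "(x + y)^2 = x^2 + y^2"
proof -
  have "(x + y)^2 = x^2 + y^2 + 2 * x * y" by (simp add: power2_eq_square algebra_simps)
  then show ?thesis using assms by simp
qed

lemma additive_zero: fixes f :: "'a::field \<Rightarrow> 'a" assumes "\<forall>x y. f (x + y) = f x + f y"
  shows "f 0 = 0"
  using assms by (metis add_cancel_right_right add_0)


lemma additive_self_mult_linear:
  fixes h :: "'a::field \<Rightarrow> 'a"
  assumes two: "(2::'a) = 0" and hadd: "\<forall>x y. h (x + y) = h x + h y"
    and h: "\<forall>x y. (x + y) * h (x + y) = x * h x + y * h y"
  shows "h x = x * h 1"
proof -
  have "(x + 1) * (h x + h 1) = x * h x + 1 * h 1" using h hadd by metis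
  then have "x * h 1 + h x = 0" by (simp add: algebra_simps)
  then show ?thesis using char2_eq[OF two] by (metis add.commute)
qed

lemma pair_scalar:
  fixes f g \<alpha> \<beta> :: "'a::field \<Rightarrow> 'a"
  assumes two: "(2::'a) = 0"
    and fa: "\<forall>x y. f (x + y) = f x + f y" and ga: "\<forall>x y. g (x + y) = g x + g y"
    and aa: "\<forall>x y. \<alpha> (x + y) = \<alpha> x + \<alpha> y" and ba: "\<forall>x y. \<beta> (x + y) = \<beta> x + \<beta> y"
    and eq: "\<forall>k l m. m * (f (k * l^2) + \<alpha> (k * l * m)) + l * (\<beta> (k * l * m) + g (k * m^2)) = 0"
  shows "\<forall>b. \<alpha> b = b * \<alpha> 1" "\<forall>b. \<beta> b = b * \<beta> 1"
    "\<forall>k l. f (k * l^2) + k * l^2 * \<beta> 1 = l * (f k + k * \<beta> 1)"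
    "\<forall>x. g x + x * \<alpha> 1 = f x + x * \<beta> 1"
proof -
  have e1: "m * \<alpha> m = m * f 1 + \<beta> m + g (m^2)" for m
  proof -
    have "m * (f 1 + \<alpha> m) + (\<beta> m + g (m^2)) = 0" using eq[rule_format, where k=1 and l=1 and m=m] by simp
    then have "m * \<alpha> m + (m * f 1 + \<beta> m + g (m^2)) = 0" by (simp add: algebra_simps)
    then show ?thesis by (simp only: char2_eq[OF two])
  qed
  have A: "\<alpha> b = b * \<alpha> 1" for b
  proof (rule additive_self_mult_linear[OF two aa], intro allI)
    fix x y :: 'a
    show "(x + y) * \<alpha> (x + y) = x * \<alpha> x + y * \<alpha> y"
    proof -
      have "(x + y) * \<alpha> (x + y) = (x + y) * f 1 + \<beta> (x + y) + g ((x + y)^2)" by (rule e1)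
      also have "\<dots> = (x * f 1 + \<beta> x + g (x^2)) + (y * f 1 + \<beta> y + g (y^2))"
      proof -
        have "\<beta> (x + y) = \<beta> x + \<beta> y" "g (x^2 + y^2) = g (x^2) + g (y^2)" using ba ga by blast+
        then show ?thesis unfolding char2_sq_add[OF two] by (simp add: distrib_right add_ac)
      qed
      also have "\<dots> = x * \<alpha> x + y * \<alpha> y" by (simp add: e1)
      finally show ?thesis .
    qed
  qed
  have e2: "l * \<beta> l = f (l^2) + \<alpha> l + l * g 1" for l
  proof -
    have "f (l^2) + \<alpha> l + l * (\<beta> l + g 1) = 0" using eq[rule_format, where k=1 and l=l and m=1] by simp
    then have "l * \<beta> l + (f (l^2) + \<alpha> l + l * g 1) = 0" by (simp add: algebra_simps)
    then show ?thesis by (simp only: char2_eq[OF two])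
  qed
  have B: "\<beta> b = b * \<beta> 1" for b
  proof (rule additive_self_mult_linear[OF two ba], intro allI)
    fix x y :: 'a
    show "(x + y) * \<beta> (x + y) = x * \<beta> x + y * \<beta> y"
    proof -
      have "(x + y) * \<beta> (x + y) = f ((x + y)^2) + \<alpha> (x + y) + (x + y) * g 1" by (rule e2)
      also have "\<dots> = (f (x^2) + \<alpha> x + x * g 1) + (f (y^2) + \<alpha> y + y * g 1)"
      proof -
        have "\<alpha> (x + y) = \<alpha> x + \<alpha> y" "f (x^2 + y^2) = f (x^2) + f (y^2)" using fa aa by blast+
        then show ?thesis unfolding char2_sq_add[OF two] by (simp add: distrib_right add_ac)
      qed
      also have "\<dots> = x * \<beta> x + y * \<beta> y" by (simp add: e2)
      finally show ?thesis .
    qed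
  qed
  have e3: "f (k * l^2) + k * l^2 * \<beta> 1 + l * (k * \<alpha> 1 + g k) = 0" for k l
  proof -
    have "f (k * l^2) + \<alpha> (k * l) + l * (\<beta> (k * l) + g k) = 0" using eq[rule_format, where k=k and l=l and m=1] by simp
    then show ?thesis unfolding A[of "k*l"] B[of "k*l"] by (simp add: algebra_simps power2_eq_square)
  qed
  have G: "g x + x * \<alpha> 1 = f x + x * \<beta> 1" for x
  proof -
    have "(f x + x * \<beta> 1) + (x * \<alpha> 1 + g x) = 0" using e3[of x 1] by simp
    then show ?thesis using char2_eq[OF two] by (simp add: add.commute)
  qed
  show "\<forall>b. \<alpha> b = b * \<alpha> 1" using A by blast
  show "\<forall>b. \<beta> b = b * \<beta> 1" using B by blast
  show "\<forall>x. g x + x * \<alpha> 1 = f x + x * \<beta> 1" using G by blast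
  show "\<forall>k l. f (k * l^2) + k * l^2 * \<beta> 1 = l * (f k + k * \<beta> 1)"
  proof (intro allI)
    fix k l
    have "(f (k * l^2) + k * l^2 * \<beta> 1) + l * (f k + k * \<beta> 1) = 0"
    proof -
      have "k * \<alpha> 1 + g k = f k + k * \<beta> 1" using G[of k] by (metis add.commute)
      then show ?thesis using e3[of k l] by simp
    qed
    then show "f (k * l^2) + k * l^2 * \<beta> 1 = l * (f k + k * \<beta> 1)" by (simp only: char2_eq[OF two])
  qed
qed

lemma sym_diag_root_in_range:
  fixes A :: "nat \<Rightarrow> nat \<Rightarrow> 'a::field" and \<rho> :: "'a \<Rightarrow> 'a"
  assumes sym: "\<forall>i<r. \<forall>j<r. A i j = A j i"
    and radd: "\<forall>x y. \<rho> (x + y) = \<rho> x + \<rho> y"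
    and rroot: "\<forall>l x. \<rho> (l^2 * x) = l * \<rho> x"
  shows "\<exists>v. \<forall>i<r. (\<Sum>j<r. A i j * v j) = \<rho> (A i i)"
  using sym
proof (induction "card {i. i < r \<and> (\<exists>j<r. A i j \<noteq> 0)}" arbitrary: A rule: less_induct)
  case less
  have r0: "\<rho> 0 = 0" using radd by (metis add_cancel_right_right add_0)
  show ?case
  proof (cases "\<forall>i<r. A i i = 0")
    case True
    then show ?thesis by (intro exI[of _ "\<lambda>_. 0"]) (simp add: r0)
  next
    case False
    then obtain k where k: "k < r" "A k k \<noteq> 0" by auto
    define A' where "A' = (\<lambda>i j. A i j - A i k * A k j / A k k)"
    have symA': "\<forall>i<r. \<forall>j<r. A' i j = A' j i"
      using less.prems k unfolding A'_def by (auto simp: mult.commute)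
    let ?S = "\<lambda>B. {i. i < r \<and> (\<exists>j<r. B i j \<noteq> 0)}"
    have sub: "?S A' \<subseteq> ?S A - {k}"
    proof
      fix i assume "i \<in> ?S A'"
      then obtain j where ij: "i < r" "j < r" "A' i j \<noteq> 0" by auto
      have "i \<noteq> k" using ij k unfolding A'_def by auto
      moreover have "\<exists>j<r. A i j \<noteq> 0"
      proof (rule ccontr)
        assume "\<not> ?thesis"
        then have "A i j = 0" "A i k = 0" using ij k by auto
        then show False using ij unfolding A'_def by simp
      qed
      ultimately show "i \<in> ?S A - {k}" using ij by auto
    qed
    have kin: "k \<in> ?S A" using k by auto
    have fin: "finite (?S A)" by auto
    have lt: "card (?S A') < card (?S A)"
    proof -
      have "card (?S A') \<le> card (?S A - {k})" using sub fin by (intro card_mono) auto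
      also have "\<dots> < card (?S A)" by (rule card_Diff1_less[OF fin kin])
      finally show ?thesis .
    qed
    obtain v' where v': "\<forall>i<r. (\<Sum>j<r. A' i j * v' j) = \<rho> (A' i i)"
      using less.hyps[OF lt symA'] by blast
    define s where "s = (\<Sum>j<r. A k j * v' j)"
    define t where "t = \<rho> (1 / A k k) - s / A k k"
    define v where "v = (\<lambda>j. v' j + (if j = k then t else 0))"
    show ?thesis
    proof (intro exI[of _ v] allI impI)
      fix i assume i: "i < r"
      have "(\<Sum>j<r. A i j * v j) = (\<Sum>j<r. A i j * v' j) + (\<Sum>j<r. A i j * (if j = k then t else 0))"
        unfolding v_def by (simp add: distrib_left sum.distrib)
      also have "(\<Sum>j<r. A i j * (if j = k then t else 0)) = A i k * t"
        using k by (simp add: if_distrib sum.delta cong: if_cong)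
      also have "(\<Sum>j<r. A i j * v' j) = (\<Sum>j<r. A' i j * v' j + A i k / A k k * (A k j * v' j))"
        unfolding A'_def by (intro sum.cong) (auto simp: algebra_simps)
      also have "\<dots> = \<rho> (A' i i) + A i k / A k k * s"
        unfolding sum.distrib s_def sum_distrib_left[symmetric] using v' i by simp
      finally have lhs0: "(\<Sum>j<r. A i j * v j) = \<rho> (A' i i) + A i k / A k k * s + A i k * t" .
      have "A i k / A k k * s + A i k * t = A i k * \<rho> (1 / A k k)"
        unfolding t_def by (simp add: right_diff_distrib)
      then have lhs: "(\<Sum>j<r. A i j * v j) = \<rho> (A' i i) + A i k * \<rho> (1 / A k k)"
        using lhs0 by (simp add: add.assoc)
      have "A i i = A' i i + (A i k)^2 * (1 / A k k)"
        unfolding A'_def using less.prems i k by (simp add: power2_eq_square)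
      moreover have "\<rho> ((A i k)^2 * (1 / A k k)) = A i k * \<rho> (1 / A k k)"
        using rroot by blast
      ultimately have "\<rho> (A i i) = \<rho> (A' i i) + A i k * \<rho> (1 / A k k)"
        using radd by metis
      then show "(\<Sum>j<r. A i j * v j) = \<rho> (A i i)" using lhs by simp
    qed
  qed
qed

lemma sum_delta_left:
  fixes f :: "nat \<Rightarrow> 'a::comm_ring_1"
  assumes "i < q" shows "(\<Sum>l<q. (if i = l then 1 else 0) * f l) = f i"
proof -
  have "(\<Sum>l<q. (if i = l then 1 else 0) * f l) = (\<Sum>l<q. if l = i then f l else 0)"
    by (intro sum.cong) auto
  then show ?thesis using assms by (simp add: sum.delta)
qed

lemma sum_delta_right:
  fixes f :: "nat \<Rightarrow> 'a::comm_ring_1"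
  assumes "j < q" shows "(\<Sum>l<q. f l * (if l = j then 1 else 0)) = f j"
proof -
  have "(\<Sum>l<q. f l * (if l = j then 1 else 0)) = (\<Sum>l<q. if l = j then f l else 0)"
    by (intro sum.cong) auto
  then show ?thesis using assms by (simp add: sum.delta)
qed

lemma invertible_right_inv:
  fixes Q :: "'a::comm_ring_1 mat"
  assumes Q: "Q \<in> carrier_mat q q" and inv: "invertible_mat Q"
  shows "\<exists>B \<in> carrier_mat q q. Q * B = 1\<^sub>m q \<and> B * Q = 1\<^sub>m q"
proof -
  obtain B where B: "Q * B = 1\<^sub>m (dim_row Q)" "B * Q = 1\<^sub>m (dim_row B)"
    using inv unfolding invertible_mat_def inverts_mat_def by blast
  have "dim_col B = q" using B(1) Q by (metis index_mult_mat(3) index_one_mat(3) carrier_matD(1))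
  moreover have "dim_row B = q" using B(2) Q by (metis index_mult_mat(3) index_one_mat(3) carrier_matD(2))
  ultimately show ?thesis using B Q by (intro bexI[of _ B]) auto
qed

lemma pad_as_mult:
  fixes M :: "'a::comm_ring_1 mat"
  assumes M: "M \<in> carrier_mat n p" and pq: "p \<le> q"
  shows "pad_cols q M = M * mat p q (\<lambda>(l,j). if l = j then 1 else 0)"
proof (rule eq_matI)
  fix i j assume i: "i < dim_row (M * mat p q (\<lambda>(l,j). if l = j then 1 else 0))"
    and j: "j < dim_col (M * mat p q (\<lambda>(l,j). if l = j then 1 else 0))"
  then have i: "i < n" and j: "j < q" using M by auto
  have "(M * mat p q (\<lambda>(l,j). if l = j then 1 else 0)) $$ (i,j) = (\<Sum>l<p. M $$ (i,l) * (if l = j then 1 else 0))"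
    using M i j by (simp add: scalar_prod_def lessThan_atLeast0)
  also have "\<dots> = (if j < p then M $$ (i,j) else 0)"
    by (simp add: if_distrib sum.delta cong: if_cong)
  finally show "pad_cols q M $$ (i,j) = (M * mat p q (\<lambda>(l,j). if l = j then 1 else 0)) $$ (i,j)"
    using M i j unfolding pad_cols_def by simp
qed (insert M, auto simp: pad_cols_def)

lemma P_right_inv:
  assumes pq: "p \<le> q"
  shows "mat p q (\<lambda>(l,j). if l = j then 1 else 0) * mat q p (\<lambda>(l,j). if l = j then 1 else 0)
        = (1\<^sub>m p :: 'a::comm_ring_1 mat)"
proof (rule eq_matI)
  fix i j assume "i < dim_row (1\<^sub>m p :: 'a mat)" "j < dim_col (1\<^sub>m p :: 'a mat)"
  then have i: "i < p" and j: "j < p" by auto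
  have "(mat p q (\<lambda>(l,j). if l = j then 1 else 0) * mat q p (\<lambda>(l,j). if l = j then 1 else 0)) $$ (i,j)
      = (\<Sum>l<q. (if i = l then 1 else 0) * (if l = j then 1 else 0) :: 'a)"
    using i j pq by (simp add: scalar_prod_def lessThan_atLeast0)
  also have "\<dots> = (if i = j then 1 else 0)" using i pq by (subst sum_delta_left) auto
  finally show "(mat p q (\<lambda>(l,j). if l = j then 1 else 0) * mat q p (\<lambda>(l,j). if l = j then 1 else 0)) $$ (i,j) = (1\<^sub>m p :: 'a mat) $$ (i,j)"
    using i j by simp
qed auto

lemma unipotent_right_inv:
  fixes N :: "nat \<Rightarrow> nat \<Rightarrow> 'a::comm_ring_1"
  assumes N: "\<And>l m. N l m \<noteq> 0 \<Longrightarrow> l < r \<and> r \<le> m"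
  shows "mat q q (\<lambda>(l,j). (if l = j then 1 else 0) + N l j) * mat q q (\<lambda>(l,j). (if l = j then 1 else 0) - N l j)
        = 1\<^sub>m q"
proof (rule eq_matI)
  fix i j assume "i < dim_row (1\<^sub>m q :: 'a mat)" "j < dim_col (1\<^sub>m q :: 'a mat)"
  then have i: "i < q" and j: "j < q" by auto
  have NN: "N i l * N l j = 0" for l
    using N[of i l] N[of l j] by (metis mult_zero_left mult_zero_right not_less)
  have "(mat q q (\<lambda>(l,j). (if l = j then 1 else 0) + N l j) * mat q q (\<lambda>(l,j). (if l = j then 1 else 0) - N l j)) $$ (i,j)
      = (\<Sum>l<q. ((if i = l then 1 else 0) + N i l) * ((if l = j then 1 else 0) - N l j))"
    using i j by (simp add: scalar_prod_def lessThan_atLeast0)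
  also have "\<dots> = (\<Sum>l<q. (if i = l then 1 else 0) * (if l = j then 1 else 0)) - (\<Sum>l<q. (if i = l then 1 else 0) * N l j)
       + (\<Sum>l<q. N i l * (if l = j then 1 else 0)) - (\<Sum>l<q. N i l * N l j)"
    by (simp add: algebra_simps sum.distrib sum_subtractf)
  also have "\<dots> = (if i = j then 1 else 0)"
    using i j NN by (simp add: sum_delta_left sum_delta_right)
  finally show "(mat q q (\<lambda>(l,j). (if l = j then 1 else 0) + N l j) * mat q q (\<lambda>(l,j). (if l = j then 1 else 0) - N l j)) $$ (i,j) = 1\<^sub>m q $$ (i,j)"
    using i j by simp
qed auto

lemma sym_vee_add:
  assumes "M \<in> sym_vee_set r n p" "N \<in> sym_vee_set r n p" "r \<le> n" "r \<le> p"
  shows "M + N \<in> (sym_vee_set r n p :: 'a::monoid_add mat set)"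
  using assms unfolding sym_vee_set_def by auto

lemma sym_vee_zero: assumes "r \<le> n" "r \<le> p" shows "0\<^sub>m n p \<in> (sym_vee_set r n p :: 'a::zero mat set)"
  using assms unfolding sym_vee_set_def by auto

lemma sum_lessThan_restrict:
  fixes g :: "nat \<Rightarrow> 'a::comm_monoid_add"
  assumes "r \<le> q" shows "(\<Sum>l<q. if l < r then g l else 0) = (\<Sum>l<r. g l)"
proof -
  have "(\<Sum>l<q. if l < r then g l else 0) = (\<Sum>l\<in>{..<q} \<inter> {l. l < r}. g l)"
    by (simp add: sum.inter_restrict)
  also have "{..<q} \<inter> {l. l < r} = {..<r}" using assms by auto
  finally show ?thesis .
qed

lemma easy_dir:
  fixes F :: "'a::field mat \<Rightarrow> 'a mat" and R :: "'a \<Rightarrow> 'a vec"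
  assumes rn: "r \<le> n" and rp: "r \<le> p" and pq: "p \<le> q"
    and Q: "Q \<in> carrier_mat q q" and Qinv: "invertible_mat Q"
    and Rc: "\<forall>x. R x \<in> carrier_vec (q - r)" and Rl: "root_linear R"
    and FM: "\<forall>M \<in> sym_vee_set r n p. F M = (pad_cols q M + root_corr r q R M) * Q"
  shows "(\<forall>M \<in> sym_vee_set r n p. F M \<in> carrier_mat n q) \<and>
         (\<forall>M \<in> sym_vee_set r n p. \<forall>N \<in> sym_vee_set r n p. F (M + N) = F M + F N) \<and>
         range_preserving_on (sym_vee_set r n p) F"
proof (intro conjI ballI)
  have Radd: "\<And>x y. R (x + y) = R x + R y" and Rroot: "\<And>l x. R (l^2 * x) = l \<cdot>\<^sub>v R x"
    using Rl unfolding root_linear_def by auto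
  have padc: "pad_cols q M \<in> carrier_mat n q" if "M \<in> sym_vee_set r n p" for M
    using that unfolding pad_cols_def sym_vee_set_def by auto
  have corrc: "root_corr r q R M \<in> carrier_mat n q" if "M \<in> sym_vee_set r n p" for M
    using that unfolding root_corr_def sym_vee_set_def by auto
  show "F M \<in> carrier_mat n q" if M: "M \<in> sym_vee_set r n p" for M
    using FM M padc[OF M] corrc[OF M] Q by auto
  show "F (M + N) = F M + F N" if M: "M \<in> sym_vee_set r n p" and N: "N \<in> sym_vee_set r n p" for M N
  proof -
    have Mc: "M \<in> carrier_mat n p" and Nc: "N \<in> carrier_mat n p" using M N unfolding sym_vee_set_def by auto
    have "pad_cols q (M + N) = pad_cols q M + pad_cols q N"
      using Mc Nc unfolding pad_cols_def by (intro eq_matI) auto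
    moreover have "root_corr r q R (M + N) = root_corr r q R M + root_corr r q R N"
    proof (intro eq_matI)
      fix i j assume "i < dim_row (root_corr r q R M + root_corr r q R N)" "j < dim_col (root_corr r q R M + root_corr r q R N)"
      then have i: "i < n" and j: "j < q" using Nc unfolding root_corr_def by auto
      show "root_corr r q R (M + N) $$ (i, j) = (root_corr r q R M + root_corr r q R N) $$ (i, j)"
      proof -
        have "\<And>x y. j - r < q - r \<Longrightarrow> (R x + R y) $ (j - r) = R x $ (j - r) + R y $ (j - r)"
          using Rc by (metis carrier_vecD index_add_vec(1))
        then show ?thesis using i j Mc Nc rn rp Rc unfolding root_corr_def by (auto simp: Radd)
      qed
    qed (insert Mc Nc, auto simp: root_corr_def)
    ultimately have sum: "pad_cols q (M + N) + root_corr r q R (M + N) = (pad_cols q M + root_corr r q R M) + (pad_cols q N + root_corr r q R N)"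
      using padc[OF M] padc[OF N] corrc[OF M] corrc[OF N] by (intro eq_matI) auto
    have "F (M + N) = ((pad_cols q M + root_corr r q R M) + (pad_cols q N + root_corr r q R N)) * Q"
      using FM sym_vee_add[OF M N rn rp] sum by simp
    also have "\<dots> = F M + F N"
      using FM M N by (subst add_mult_distrib_mat[OF add_carrier_mat[OF corrc[OF M]]
          add_carrier_mat[OF corrc[OF N]] Q]) simp
    finally show ?thesis .
  qed
  show "range_preserving_on (sym_vee_set r n p) F"
    unfolding range_preserving_on_def
  proof
    fix M :: "'a mat" assume M: "M \<in> sym_vee_set r n p"
    have Mc: "M \<in> carrier_mat n p" and Msym: "\<forall>i<r. \<forall>j<r. M $$ (i,j) = M $$ (j,i)"
      and Mlow: "\<forall>i j. r \<le> i \<and> i < n \<and> j < r \<longrightarrow> M $$ (i, j) = 0"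
      using M unfolding sym_vee_set_def by auto
    have "\<forall>t<q-r. \<exists>v. \<forall>i<r. (\<Sum>j<r. M $$ (i,j) * v j) = R (M $$ (i,i)) $ t"
    proof (intro allI impI)
      fix t assume t: "t < q - r"
      show "\<exists>v. \<forall>i<r. (\<Sum>j<r. M $$ (i,j) * v j) = R (M $$ (i,i)) $ t"
      proof (rule sym_diag_root_in_range[where \<rho> = "\<lambda>x. R x $ t"])
        show "\<forall>i<r. \<forall>j<r. M $$ (i,j) = M $$ (j,i)" by (rule Msym)
        show "\<forall>x y. R (x + y) $ t = R x $ t + R y $ t" using Rc t by (metis Radd carrier_vecD index_add_vec(1))
        show "\<forall>l x. R (l^2 * x) $ t = l * R x $ t" using Rc t by (metis Rroot carrier_vecD index_smult_vec(1))
      qed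
    qed
    then obtain U where U: "\<forall>t<q-r. \<forall>i<r. (\<Sum>j<r. M $$ (i,j) * U t j) = R (M $$ (i,i)) $ t"
      by metis
    define N where "N = (\<lambda>l j. if l < r \<and> r \<le> j then U (j - r) l else (0::'a))"
    define T where "T = mat q q (\<lambda>(l,j). (if l = j then 1 else 0) + N l j)"
    define T' where "T' = mat q q (\<lambda>(l,j). (if l = j then 1 else 0) - N l j)"
    define P where "P = mat p q (\<lambda>(l,j). if l = j then (1::'a) else 0)"
    define P' where "P' = mat q p (\<lambda>(l,j). if l = j then (1::'a) else 0)"
    have TT: "T * T' = 1\<^sub>m q" unfolding T_def T'_def
      by (rule unipotent_right_inv) (auto simp: N_def split: if_splits)
    have PP: "P * P' = 1\<^sub>m p" unfolding P_def P'_def by (rule P_right_inv[OF pq])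
    have padP: "pad_cols q M = M * P" unfolding P_def by (rule pad_as_mult[OF Mc pq])
    have padT: "pad_cols q M * T = pad_cols q M + root_corr r q R M"
    proof (rule eq_matI)
      fix i j assume "i < dim_row (pad_cols q M + root_corr r q R M)" "j < dim_col (pad_cols q M + root_corr r q R M)"
      then have i: "i < n" and j: "j < q" using Mc unfolding root_corr_def by auto
      have "(pad_cols q M * T) $$ (i,j) = (\<Sum>l<q. pad_cols q M $$ (i,l) * ((if l = j then 1 else 0) + N l j))"
        using i j Mc unfolding T_def pad_cols_def by (simp add: scalar_prod_def lessThan_atLeast0)
      also have "\<dots> = pad_cols q M $$ (i,j) + (\<Sum>l<q. pad_cols q M $$ (i,l) * N l j)"
        using j by (simp add: distrib_left sum.distrib sum_delta_right)
      also have "(\<Sum>l<q. pad_cols q M $$ (i,l) * N l j) = (if r \<le> j then (\<Sum>l<r. M $$ (i,l) * U (j - r) l) else 0)"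
      proof -
        have "(\<Sum>l<q. pad_cols q M $$ (i,l) * N l j) = (\<Sum>l<q. if l < r then (if r \<le> j then M $$ (i,l) * U (j - r) l else 0) else 0)"
          using i Mc rp pq unfolding N_def pad_cols_def by (intro sum.cong) auto
        also have "\<dots> = (\<Sum>l<r. (if r \<le> j then M $$ (i,l) * U (j - r) l else 0))"
          using rp pq by (intro sum_lessThan_restrict) auto
        finally show ?thesis by simp
      qed
      also have "(if r \<le> j then (\<Sum>l<r. M $$ (i,l) * U (j - r) l) else 0) = root_corr r q R M $$ (i,j)"
      proof (cases "i < r \<and> r \<le> j")
        case True
        then show ?thesis using U j i Mc unfolding root_corr_def by auto
      next
        case False
        then show ?thesis using Mlow i j Mc unfolding root_corr_def by auto
      qed
      finally show "(pad_cols q M * T) $$ (i,j) = (pad_cols q M + root_corr r q R M) $$ (i,j)"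
        using i j Mc unfolding root_corr_def pad_cols_def by simp
    qed (insert Mc, auto simp: pad_cols_def T_def root_corr_def)
    have Pc: "P \<in> carrier_mat p q" and P'c: "P' \<in> carrier_mat q p" unfolding P_def P'_def by auto
    have Tc: "T \<in> carrier_mat q q" and T'c: "T' \<in> carrier_mat q q" unfolding T_def T'_def by auto
    obtain B where Bc: "B \<in> carrier_mat q q" and QB: "Q * B = 1\<^sub>m q"
      using invertible_right_inv[OF Q Qinv] by blast
    have "F M = ((M * P) * T) * Q" using FM M padT padP by simp
    then have "col_space (F M) = col_space ((M * P) * T)"
      using col_space_mult_right_inv[OF _ Q Bc QB, of "(M * P) * T" n] Mc Pc Tc by simp
    also have "\<dots> = col_space (M * P)"
      using col_space_mult_right_inv[OF _ Tc T'c TT, of "M * P" n] Mc Pc by simp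
    also have "\<dots> = col_space M"
      using col_space_mult_right_inv[OF Mc Pc P'c PP] .
    finally show "col_space (F M) = col_space M" .
  qed
qed

definition Em :: "nat \<Rightarrow> nat \<Rightarrow> nat \<Rightarrow> nat \<Rightarrow> 'a::zero \<Rightarrow> 'a mat" where
  "Em n p i k a = mat n p (\<lambda>(i',k'). if i' = i \<and> k' = k then a else 0)"

definition Sm :: "nat \<Rightarrow> nat \<Rightarrow> nat \<Rightarrow> nat \<Rightarrow> 'a::zero \<Rightarrow> 'a mat" where
  "Sm n p i j b = mat n p (\<lambda>(i',k'). if (i' = i \<and> k' = j) \<or> (i' = j \<and> k' = i) then b else 0)"

lemma Sm_sym: "Sm n p i j b = Sm n p j i b"
  unfolding Sm_def by (intro eq_matI) auto

lemma Em_add: "Em n p i k (a + b) = Em n p i k a + (Em n p i k b :: 'a::monoid_add mat)"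
  unfolding Em_def by (intro eq_matI) auto

lemma Sm_add: "Sm n p i j (a + b) = Sm n p i j a + (Sm n p i j b :: 'a::monoid_add mat)"
  unfolding Sm_def by (intro eq_matI) auto

lemma Em_dim[simp]: "dim_row (Em n p i k a) = n" "dim_col (Em n p i k a) = p" unfolding Em_def by auto
lemma Sm_dim[simp]: "dim_row (Sm n p i j b) = n" "dim_col (Sm n p i j b) = p" unfolding Sm_def by auto

lemma Em_carrier[simp]: "Em n p i k a \<in> carrier_mat n p" unfolding Em_def by auto
lemma Sm_carrier[simp]: "Sm n p i j b \<in> carrier_mat n p" unfolding Sm_def by auto

lemma Em_index[simp]: "l < n \<Longrightarrow> k' < p \<Longrightarrow> Em n p i k a $$ (l,k') = (if l = i \<and> k' = k then a else 0)"
  unfolding Em_def by auto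
lemma Sm_index[simp]: "l < n \<Longrightarrow> k' < p \<Longrightarrow> Sm n p i j b $$ (l,k') = (if (l = i \<and> k' = j) \<or> (l = j \<and> k' = i) then b else 0)"
  unfolding Sm_def by auto

lemma sum_two_points:
  fixes f :: "nat \<Rightarrow> 'a::comm_ring_1"
  assumes "a < n" "b < n" "a \<noteq> b"
  shows "(\<Sum>i<n. (if i = a then u else if i = b then v else 0) * f i) = u * f a + v * f b"
proof -
  have "(\<Sum>i<n. (if i = a then u else if i = b then v else 0) * f i)
      = (\<Sum>i<n. (if i = a then u * f i else 0)) + (\<Sum>i<n. (if i = b then v * f i else 0))"
    unfolding sum.distrib[symmetric] using assms by (intro sum.cong) auto
  then show ?thesis using assms by (simp add: sum.delta)
qed

lemma sum_delta_left':
  fixes f :: "nat \<Rightarrow> 'a::comm_ring_1"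
  assumes "l < n" shows "(\<Sum>i<n. (if i = l then 1 else 0) * f i) = f l"
proof -
  have "(\<Sum>i<n. (if i = l then 1 else 0) * f i) = (\<Sum>i<n. if i = l then f i else 0)"
    by (intro sum.cong) auto
  then show ?thesis using assms by (simp add: sum.delta')
qed

lemma char2_two: assumes "CHAR('a::field) = 2" shows "(2::'a) = 0"
  using of_nat_CHAR[where 'a='a] assms by simp

locale RC =
  fixes F :: "'a::field mat \<Rightarrow> 'a mat" and n p q r :: nat
  assumes two: "(2::'a) = 0" and r2: "2 \<le> r" and rn: "r \<le> n" and rp: "r \<le> p"
    and Fc: "\<forall>M \<in> sym_vee_set r n p. F M \<in> carrier_mat n q"
    and Fadd: "\<forall>M \<in> sym_vee_set r n p. \<forall>N \<in> sym_vee_set r n p. F (M + N) = F M + F N"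
    and Frp: "range_preserving_on (sym_vee_set r n p) F"
begin

abbreviation "S \<equiv> (sym_vee_set r n p :: 'a mat set)"

lemma Em_S: "i < n \<Longrightarrow> r \<le> k \<Longrightarrow> k < p \<Longrightarrow> Em n p i k a \<in> S"
  using rn rp unfolding sym_vee_set_def by auto
lemma Ed_S: "i < r \<Longrightarrow> Em n p i i a \<in> S"
  using rn rp unfolding sym_vee_set_def by auto
lemma Sm_S: "i < r \<Longrightarrow> j < r \<Longrightarrow> Sm n p i j b \<in> S"
  using rn rp unfolding sym_vee_set_def by auto
lemma S_add: "M \<in> S \<Longrightarrow> N \<in> S \<Longrightarrow> M + N \<in> S"
  using sym_vee_add rn rp by blast
lemma S_carrier: "M \<in> S \<Longrightarrow> M \<in> carrier_mat n p"
  unfolding sym_vee_set_def by auto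

lemma ann1:
  assumes M: "M \<in> S" and y: "\<forall>k<p. (\<Sum>i<n. y i * M $$ (i,k)) = 0" and j: "j < q"
  shows "(\<Sum>i<n. y i * F M $$ (i,j)) = 0"
  using col_ann[OF Fc[rule_format, OF M] S_carrier[OF M] _ y j] Frp M
  unfolding range_preserving_on_def by auto

lemma ann2:
  assumes M: "M \<in> S" and y: "\<forall>j<q. (\<Sum>i<n. y i * F M $$ (i,j)) = 0" and k: "k < p"
  shows "(\<Sum>i<n. y i * M $$ (i,k)) = 0"
  using col_ann[OF S_carrier[OF M] Fc[rule_format, OF M] _ y k] Frp M
  unfolding range_preserving_on_def by auto

lemma row_zero:
  assumes M: "M \<in> S" and l: "l < n" and z: "\<forall>k<p. M $$ (l,k) = 0" and j: "j < q"
  shows "F M $$ (l,j) = 0"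
proof -
  have "(\<Sum>i<n. (if i = l then 1 else 0) * F M $$ (i,j)) = 0"
    by (rule ann1[OF M _ j]) (use l z in \<open>simp add: sum_delta_left'\<close>)
  then show ?thesis using l by (simp add: sum_delta_left')
qed

lemma two_rows:
  assumes M: "M \<in> S" and a: "a < n" and b: "b < n" and ab: "a \<noteq> b"
    and z: "\<forall>k<p. u * M $$ (a,k) + v * M $$ (b,k) = 0" and j: "j < q"
  shows "u * F M $$ (a,j) + v * F M $$ (b,j) = 0"
proof -
  have "(\<Sum>i<n. (if i = a then u else if i = b then v else 0) * F M $$ (i,j)) = 0"
    by (rule ann1[OF M _ j]) (use a b ab z in \<open>simp add: sum_two_points\<close>)
  then show ?thesis using a b ab by (simp add: sum_two_points)
qed

lemma F_zero: "F (0\<^sub>m n p) = 0\<^sub>m n q"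
proof -
  have z: "0\<^sub>m n p \<in> S" using sym_vee_zero rn rp by blast
  have e: "F (0\<^sub>m n p) = F (0\<^sub>m n p) + F (0\<^sub>m n p)" using Fadd z by (metis left_add_zero_mat zero_carrier_mat)
  show ?thesis
  proof (rule eq_matI)
    fix i j assume "i < dim_row (0\<^sub>m n q :: 'a mat)" "j < dim_col (0\<^sub>m n q :: 'a mat)"
    then have ij: "i < n" "j < q" by auto
    have "F (0\<^sub>m n p) $$ (i,j) = F (0\<^sub>m n p) $$ (i,j) + F (0\<^sub>m n p) $$ (i,j)"
      using arg_cong[OF e, of "\<lambda>X. X $$ (i,j)"] Fc z ij by auto
    then have "F (0\<^sub>m n p) $$ (i,j) = 0" by (metis add_cancel_right_right)
    then show "F (0\<^sub>m n p) $$ (i,j) = (0\<^sub>m n q :: 'a mat) $$ (i,j)" using ij by simp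
  qed (use Fc z in auto)
qed

lemma F_add_entry:
  assumes "M \<in> S" "N \<in> S" "l < n" "j < q"
  shows "F (M + N) $$ (l,j) = F M $$ (l,j) + F N $$ (l,j)"
  using Fadd assms Fc by auto

end

context RC begin

lemma c2: "x + y = 0 \<longleftrightarrow> x = (y::'a)" by (rule char2_eq[OF two])

lemma free_rows_zero: "i < n \<Longrightarrow> r \<le> k \<Longrightarrow> k < p \<Longrightarrow> l < n \<Longrightarrow> l \<noteq> i \<Longrightarrow> j < q \<Longrightarrow>
   F (Em n p i k a) $$ (l,j) = 0"
  by (rule row_zero[OF Em_S]) auto

lemma diag_rows_zero: "i < r \<Longrightarrow> l < n \<Longrightarrow> l \<noteq> i \<Longrightarrow> j < q \<Longrightarrow> F (Em n p i i a) $$ (l,j) = 0"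
  by (rule row_zero[OF Ed_S]) auto

lemma sym_rows_zero: "i < r \<Longrightarrow> i' < r \<Longrightarrow> l < n \<Longrightarrow> l \<noteq> i \<Longrightarrow> l \<noteq> i' \<Longrightarrow> j < q \<Longrightarrow> F (Sm n p i i' b) $$ (l,j) = 0"
  by (rule row_zero[OF Sm_S]) auto

lemma free_cross:
  assumes i: "i < n" and i': "i' < n" and ii: "i \<noteq> i'" and k: "r \<le> k" "k < p" and j: "j < q"
  shows "b * F (Em n p i k a) $$ (i,j) + a * F (Em n p i' k b) $$ (i',j) = 0"
proof -
  let ?M = "Em n p i k a + Em n p i' k b"
  have M: "?M \<in> S" using S_add Em_S i i' k by blast
  have "b * F ?M $$ (i,j) + a * F ?M $$ (i',j) = 0"
  proof (rule two_rows[OF M i i' ii _ j], intro allI impI)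
    fix k' assume "k' < p"
    then show "b * ?M $$ (i,k') + a * ?M $$ (i',k') = 0"
      using i i' ii two by (auto simp: algebra_simps)
  qed
  moreover have "F ?M $$ (i,j) = F (Em n p i k a) $$ (i,j)"
    using F_add_entry[OF Em_S Em_S] free_rows_zero i i' ii k j by simp
  moreover have "F ?M $$ (i',j) = F (Em n p i' k b) $$ (i',j)"
    using F_add_entry[OF Em_S Em_S] free_rows_zero i i' ii k j by simp
  ultimately show ?thesis by simp
qed

lemma free_lin:
  assumes i: "i < n" and k: "r \<le> k" "k < p" and j: "j < q"
  shows "F (Em n p i k a) $$ (i,j) = a * F (Em n p 0 k 1) $$ (0,j)"
proof -
  have n2: "1 < n" using r2 rn by simp
  have gen: "F (Em n p i k a) $$ (i,j) = a * F (Em n p i' k 1) $$ (i',j)" if "i' < n" "i \<noteq> i'" for i'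
    using free_cross[OF i that(1) that(2) k j, of 1 a] c2 by simp
  show ?thesis
  proof (cases "i = 0")
    case False
    then show ?thesis using gen[of 0] n2 by simp
  next
    case True
    have "F (Em n p 1 k 1) $$ (1,j) = 1 * F (Em n p 0 k 1) $$ (0,j)"
      using free_cross[OF _ _ _ k j, of 1 0 1 1] n2 c2 by simp
    then show ?thesis using gen[of 1] n2 True by simp
  qed
qed

definition psi :: "nat \<Rightarrow> 'a \<Rightarrow> nat \<Rightarrow> 'a" where "psi i x c = F (Em n p i i x) $$ (i,c)"
definition Tm :: "nat \<Rightarrow> nat \<Rightarrow> nat \<Rightarrow> 'a" where "Tm i j c = F (Sm n p i j 1) $$ (i,c)"

lemma psi_add: "i < r \<Longrightarrow> c < q \<Longrightarrow> psi i (x + y) c = psi i x c + psi i y c"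
  unfolding psi_def Em_add using F_add_entry[OF Ed_S Ed_S] rn by simp

lemma Sm_row_add: "i < r \<Longrightarrow> j < r \<Longrightarrow> l < n \<Longrightarrow> c < q \<Longrightarrow>
   F (Sm n p i j (x + y)) $$ (l,c) = F (Sm n p i j x) $$ (l,c) + F (Sm n p i j y) $$ (l,c)"
  unfolding Sm_add using F_add_entry[OF Sm_S Sm_S] by simp

lemma pair_eq:
  assumes i: "i < r" and j: "j < r" and ij: "i \<noteq> j" and c: "c < q"
  shows "m * (psi i (k * l^2) c + F (Sm n p i j (k * l * m)) $$ (i,c))
       + l * (F (Sm n p i j (k * l * m)) $$ (j,c) + psi j (k * m^2) c) = 0"
proof -
  let ?E1 = "Em n p i i (k * l^2)" and ?S = "Sm n p i j (k * l * m)" and ?E2 = "Em n p j j (k * m^2)"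
  have E1: "?E1 \<in> S" and E2: "?E2 \<in> S" and Sx: "?S \<in> S" using Ed_S Sm_S i j by auto
  have V: "?E1 + ?S + ?E2 \<in> S" using S_add E1 E2 Sx by blast
  have iN: "i < n" and jN: "j < n" using i j rn by auto
  have "m * F (?E1 + ?S + ?E2) $$ (i,c) + l * F (?E1 + ?S + ?E2) $$ (j,c) = 0"
  proof (rule two_rows[OF V iN jN ij _ c], intro allI impI)
    fix k' assume k': "k' < p"
    have "m * (k * l^2) + l * (k * l * m) = 2 * (k * l^2 * m)"
      by (simp add: power2_eq_square algebra_simps)
    moreover have "m * (k * l * m) + l * (k * m^2) = 2 * (k * l * m^2)"
      by (simp add: power2_eq_square algebra_simps)
    ultimately show "m * (?E1 + ?S + ?E2) $$ (i,k') + l * (?E1 + ?S + ?E2) $$ (j,k') = 0"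
      using k' iN jN ij two rp by auto
  qed
  moreover have "F (?E1 + ?S + ?E2) $$ (i,c) = psi i (k * l^2) c + F ?S $$ (i,c)"
    using F_add_entry[OF S_add[OF E1 Sx] E2 iN c] F_add_entry[OF E1 Sx iN c]
      diag_rows_zero[OF j iN ij c] unfolding psi_def by simp
  moreover have "F (?E1 + ?S + ?E2) $$ (j,c) = F ?S $$ (j,c) + psi j (k * m^2) c"
    using F_add_entry[OF S_add[OF E1 Sx] E2 jN c] F_add_entry[OF E1 Sx jN c]
      diag_rows_zero[OF i jN ij[symmetric] c] unfolding psi_def by simp
  ultimately show ?thesis by (simp add: algebra_simps)
qed

lemma pair_facts:
  assumes i: "i < r" and j: "j < r" and ij: "i \<noteq> j" and c: "c < q"
  shows "\<forall>b. F (Sm n p i j b) $$ (i,c) = b * Tm i j c"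
    "\<forall>b. F (Sm n p i j b) $$ (j,c) = b * Tm j i c"
    "\<forall>k l. psi i (k * l^2) c + k * l^2 * Tm j i c = l * (psi i k c + k * Tm j i c)"
    "\<forall>x. psi j x c + x * Tm i j c = psi i x c + x * Tm j i c"
proof -
  have iN: "i < n" and jN: "j < n" using i j rn by auto
  have TT: "Tm j i c = F (Sm n p i j 1) $$ (j,c)" unfolding Tm_def by (simp add: Sm_sym)
  note P = pair_scalar[OF two, where f = "\<lambda>x. psi i x c" and g = "\<lambda>x. psi j x c"
      and \<alpha> = "\<lambda>b. F (Sm n p i j b) $$ (i,c)" and \<beta> = "\<lambda>b. F (Sm n p i j b) $$ (j,c)"]
  have fa: "\<forall>x y. psi i (x + y) c = psi i x c + psi i y c" using psi_add i c by blast
  have ga: "\<forall>x y. psi j (x + y) c = psi j x c + psi j y c" using psi_add j c by blast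
  have aa: "\<forall>x y. F (Sm n p i j (x + y)) $$ (i,c) = F (Sm n p i j x) $$ (i,c) + F (Sm n p i j y) $$ (i,c)"
    using Sm_row_add i j iN c by blast
  have ba: "\<forall>x y. F (Sm n p i j (x + y)) $$ (j,c) = F (Sm n p i j x) $$ (j,c) + F (Sm n p i j y) $$ (j,c)"
    using Sm_row_add i j jN c by blast
  have eq: "\<forall>k l m. m * (psi i (k * l^2) c + F (Sm n p i j (k * l * m)) $$ (i,c))
       + l * (F (Sm n p i j (k * l * m)) $$ (j,c) + psi j (k * m^2) c) = 0"
    using pair_eq[OF i j ij c] by blast
  note R = P[OF fa ga aa ba eq]
  show "\<forall>b. F (Sm n p i j b) $$ (i,c) = b * Tm i j c" using R(1) unfolding Tm_def .
  show "\<forall>b. F (Sm n p i j b) $$ (j,c) = b * Tm j i c" using R(2) unfolding TT .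
  show "\<forall>k l. psi i (k * l^2) c + k * l^2 * Tm j i c = l * (psi i k c + k * Tm j i c)"
    using R(3) unfolding TT .
  show "\<forall>x. psi j x c + x * Tm i j c = psi i x c + x * Tm j i c" using R(4) by (simp add: TT Tm_def[of i j c])
qed

end

context RC begin

lemma one_one: "(1::'a) + 1 = 0" using two by (metis one_add_one)

lemma triple:
  assumes i: "i < r" and j: "j < r" and k: "k < r" and ij: "i \<noteq> j" and ik: "i \<noteq> k" and jk: "j \<noteq> k"
    and c: "c < q"
  shows "Tm i k c = Tm j k c"
proof -
  let ?V = "Em n p i i 1 + Em n p j j 1 + Em n p k k 1 + Sm n p i j 1 + Sm n p i k 1 + (Sm n p j k 1 :: 'a mat)"
  have iN: "i < n" and jN: "j < n" and kN: "k < n" using i j k rn by auto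
  have V: "?V \<in> S" using i j k by (simp add: S_add Ed_S Sm_S)
  have "1 * F ?V $$ (i,c) + 1 * F ?V $$ (j,c) = 0"
  proof (rule two_rows[OF V iN jN ij _ c], intro allI impI)
    fix k' assume k': "k' < p"
    show "1 * ?V $$ (i,k') + 1 * ?V $$ (j,k') = 0"
      using k' iN jN kN ij ik jk one_one by auto
  qed
  moreover have "F ?V $$ (i,c) = psi i 1 c + Tm i j c + Tm i k c"
    using i j k iN c ij ik jk diag_rows_zero[OF j iN ij c] diag_rows_zero[OF k iN ik c]
      sym_rows_zero[OF j k iN ij ik c]
    by (simp add: S_add Ed_S Sm_S F_add_entry psi_def Tm_def)
  moreover have "F ?V $$ (j,c) = psi j 1 c + Tm j i c + Tm j k c"
    using i j k jN c ij ik jk diag_rows_zero[OF i jN ij[symmetric] c] diag_rows_zero[OF k jN jk c]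
      sym_rows_zero[OF i k jN ij[symmetric] jk c]
    by (simp add: S_add Ed_S Sm_S F_add_entry psi_def Tm_def Sm_sym[of n p i j])
  ultimately have A: "(psi i 1 c + Tm i j c + Tm i k c) + (psi j 1 c + Tm j i c + Tm j k c) = 0" by simp
  have B: "(psi j 1 c + Tm i j c) + (psi i 1 c + Tm j i c) = 0"
  proof -
    have "psi j 1 c + 1 * Tm i j c = psi i 1 c + 1 * Tm j i c" using pair_facts(4)[OF i j ij c] by blast
    then show ?thesis by (simp only: c2 mult_1)
  qed
  have "Tm i k c + Tm j k c = ((psi i 1 c + Tm i j c + Tm i k c) + (psi j 1 c + Tm j i c + Tm j k c))
      + ((psi j 1 c + Tm i j c) + (psi i 1 c + Tm j i c)) - 2 * (psi i 1 c + psi j 1 c + Tm i j c + Tm j i c)"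
    by (simp add: algebra_simps)
  then have "Tm i k c + Tm j k c = 0" using A B two by simp
  then show ?thesis using c2 by simp
qed

definition oth :: "nat \<Rightarrow> nat" where "oth k = (if k = 0 then 1 else 0)"
definition xv :: "nat \<Rightarrow> nat \<Rightarrow> 'a" where
  "xv k c = (if k < r then Tm (oth k) k c else F (Em n p 0 k 1) $$ (0,c))"
definition Rf :: "'a \<Rightarrow> nat \<Rightarrow> 'a" where "Rf x c = psi 0 x c + x * xv 0 c"

lemma oth: "k < r \<Longrightarrow> oth k < r \<and> oth k \<noteq> k" unfolding oth_def using r2 by auto

lemma Tfact: assumes a: "a < r" and k: "k < r" and ak: "a \<noteq> k" and c: "c < q"
  shows "Tm a k c = xv k c"
proof (cases "a = oth k")
  case True then show ?thesis unfolding xv_def using k by simp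
next
  case False
  then show ?thesis unfolding xv_def using k triple[OF a _ k False ak, of c] oth[OF k] c by auto
qed

lemma P1: assumes i: "i < n" and k: "r \<le> k" "k < p" and l: "l < n" and c: "c < q"
  shows "F (Em n p i k a) $$ (l,c) = (if l = i then a * xv k c else 0)"
  using free_lin[OF i k c] free_rows_zero[OF i k l _ c] k rp unfolding xv_def by auto

lemma P3: assumes i: "i < r" and j: "j < r" and ij: "i \<noteq> j" and l: "l < n" and c: "c < q"
  shows "F (Sm n p i j b) $$ (l,c) = (if l = i then b * xv j c else if l = j then b * xv i c else 0)"
  using pair_facts(1,2)[OF i j ij c] sym_rows_zero[OF i j l _ _ c] Tfact[OF i j ij c]
    Tfact[OF j i ij[symmetric] c] by auto

lemma P2: assumes i: "i < r" and l: "l < n" and c: "c < q"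
  shows "F (Em n p i i a) $$ (l,c) = (if l = i then a * xv i c + Rf a c else 0)"
proof (cases "l = i")
  case False then show ?thesis using diag_rows_zero[OF i l False c] by simp
next
  case True
  have "psi i a c = a * xv i c + Rf a c"
  proof (cases "i = 0")
    case True
    have "a * xv 0 c + a * xv 0 c = 0" using c2 by blast
    then show ?thesis unfolding Rf_def True by (simp add: algebra_simps)
  next
    case False
    have r0: "0 < r" using r2 by simp
    have "psi i a c + a * Tm 0 i c = psi 0 a c + a * Tm i 0 c"
      using pair_facts(4)[OF r0 i False[symmetric] c] by blast
    then have e: "psi i a c + a * xv i c = psi 0 a c + a * xv 0 c"
      using Tfact[OF r0 i False[symmetric] c] Tfact[OF i r0 False c] by simp
    have "psi i a c = (psi i a c + a * xv i c) + a * xv i c - 2 * (a * xv i c)" by (simp add: algebra_simps)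
    also have "\<dots> = (psi 0 a c + a * xv 0 c) + a * xv i c" using e two by simp
    finally show ?thesis unfolding Rf_def by (simp add: algebra_simps)
  qed
  then show ?thesis using True unfolding psi_def by simp
qed

lemma Rf_add: "c < q \<Longrightarrow> Rf (x + y) c = Rf x c + Rf y c"
  unfolding Rf_def using psi_add[of 0 c x y] r2 by (simp add: algebra_simps)

lemma Rf_root: assumes c: "c < q" shows "Rf (k * l^2) c = l * Rf k c"
proof -
  have r0: "0 < r" and r1: "1 < r" using r2 by auto
  have "psi 0 (k * l^2) c + k * l^2 * Tm 1 0 c = l * (psi 0 k c + k * Tm 1 0 c)"
    using pair_facts(3)[OF r0 r1 _ c] by simp
  moreover have "Tm 1 0 c = xv 0 c" using Tfact[OF r1 r0 _ c] by simp
  ultimately show ?thesis unfolding Rf_def by simp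
qed

lemma Rf_zero: "c < q \<Longrightarrow> Rf 0 c = 0"
  using Rf_add[of c 0 0] by (metis add_cancel_right_right add_0)

end

lemma sum_if_eq_single:
  fixes g :: "nat \<Rightarrow> 'a::comm_ring_1"
  shows "(\<Sum>k'<p. (if k' = k then a else 0) * g k') = (if k < p then a * g k else 0)"
proof -
  have "(\<Sum>k'<p. (if k' = k then a else 0) * g k') = (\<Sum>k'<p. if k' = k then a * g k' else 0)"
    by (intro sum.cong) auto
  then show ?thesis by (simp add: sum.delta')
qed

context RC begin

definition UP :: "(nat \<times> nat) set" where
  "UP = {(i,k). i < n \<and> k < p \<and> (r \<le> k \<or> i \<le> k)}"

definition cut :: "(nat \<times> nat) set \<Rightarrow> 'a mat \<Rightarrow> 'a mat" where
  "cut Z M = mat n p (\<lambda>(i,k). if (i,k) \<in> Z \<or> (k < r \<and> (k,i) \<in> Z) then M $$ (i,k) else 0)"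

definition piece :: "'a mat \<Rightarrow> nat \<times> nat \<Rightarrow> 'a mat" where
  "piece M z = (case z of (i,k) \<Rightarrow> if r \<le> k then Em n p i k (M $$ (i,k))
      else if i = k then Em n p i i (M $$ (i,i)) else Sm n p i k (M $$ (i,k)))"

definition Gm :: "'a mat \<Rightarrow> 'a mat" where
  "Gm M = mat n q (\<lambda>(l,c). (\<Sum>k<p. M $$ (l,k) * xv k c) + (if l < r then Rf (M $$ (l,l)) c else 0))"

lemma finite_UP: "finite UP"
proof -
  have "UP \<subseteq> {..<n} \<times> {..<p}" unfolding UP_def by auto
  then show ?thesis by (rule finite_subset) auto
qed

lemma cut_S: assumes M: "M \<in> S" shows "cut Z M \<in> S"
  using M rn rp unfolding sym_vee_set_def cut_def by auto

lemma cut_UP: assumes M: "M \<in> S" shows "cut UP M = M"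
proof (rule eq_matI)
  have Mc: "M \<in> carrier_mat n p" using M by (rule S_carrier)
  fix i k assume "i < dim_row M" "k < dim_col M"
  then have i: "i < n" and k: "k < p" using Mc by auto
  show "cut UP M $$ (i,k) = M $$ (i,k)"
    using i k M rn rp unfolding cut_def UP_def sym_vee_set_def by auto
qed (use S_carrier[OF M] in \<open>auto simp: cut_def\<close>)

lemma cut_empty: "cut {} M = 0\<^sub>m n p"
  unfolding cut_def by (intro eq_matI) auto

lemma piece_carrier[simp]: "dim_row (piece M z) = n" "dim_col (piece M z) = p"
  unfolding piece_def by (auto split: prod.splits)

lemma cut_insert:
  assumes M: "M \<in> S" and Z: "Z \<subseteq> UP" and z: "z \<in> UP" and zZ: "z \<notin> Z"
  shows "cut (insert z Z) M = cut Z M + piece M z"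
proof (rule eq_matI)
  obtain i0 k0 where z0: "z = (i0,k0)" by (cases z)
  fix i k assume "i < dim_row (cut Z M + piece M z)" "k < dim_col (cut Z M + piece M z)"
  then have i: "i < n" and k: "k < p" unfolding cut_def by auto
  have i0: "i0 < n" and k0: "k0 < p" and up: "r \<le> k0 \<or> i0 \<le> k0" using z z0 unfolding UP_def by auto
  have Msym: "\<forall>i<r. \<forall>j<r. M $$ (i,j) = M $$ (j,i)" and Mlow: "\<forall>i j. r \<le> i \<and> i < n \<and> j < r \<longrightarrow> M $$ (i,j) = 0"
    using M unfolding sym_vee_set_def by auto
  have ZUP: "\<And>a b. (a,b) \<in> Z \<Longrightarrow> a < n \<and> b < p \<and> (r \<le> b \<or> a \<le> b)" using Z unfolding UP_def by auto
  show "cut (insert z Z) M $$ (i,k) = (cut Z M + piece M z) $$ (i,k)"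
  proof (cases "r \<le> k0")
    case True
    then show ?thesis using i k i0 k0 z0 zZ Mlow ZUP[of k i] ZUP[of i k] rn rp
      unfolding cut_def piece_def by (auto)
  next
    case False
    then show ?thesis using i k i0 k0 z0 zZ Mlow Msym up ZUP[of k i] ZUP[of i k] rn rp
      unfolding cut_def piece_def by (auto)
  qed
qed (auto simp: cut_def piece_def split: prod.splits)

lemma piece_S: assumes z: "z \<in> UP" shows "piece M z \<in> S"
  using z Em_S Ed_S Sm_S rn unfolding UP_def piece_def by (auto split: prod.splits)

lemma Gm_carrier: "Gm M \<in> carrier_mat n q" unfolding Gm_def by auto

lemma Gm_add: assumes A: "A \<in> carrier_mat n p" and B: "B \<in> carrier_mat n p"
  shows "Gm (A + B) = Gm A + Gm B"
proof (rule eq_matI)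
  fix l c assume "l < dim_row (Gm A + Gm B)" "c < dim_col (Gm A + Gm B)"
  then have l: "l < n" and c: "c < q" unfolding Gm_def by auto
  have "(\<Sum>k<p. (A + B) $$ (l,k) * xv k c) = (\<Sum>k<p. A $$ (l,k) * xv k c) + (\<Sum>k<p. B $$ (l,k) * xv k c)"
  proof -
    have "(\<Sum>k<p. (A + B) $$ (l,k) * xv k c) = (\<Sum>k<p. A $$ (l,k) * xv k c + B $$ (l,k) * xv k c)"
      using A B l by (intro sum.cong) (auto simp: distrib_right)
    then show ?thesis by (simp add: sum.distrib)
  qed
  moreover have "l < r \<Longrightarrow> Rf ((A + B) $$ (l,l)) c = Rf (A $$ (l,l)) c + Rf (B $$ (l,l)) c"
    using A B l c rp by (simp add: Rf_add)
  ultimately show "Gm (A + B) $$ (l,c) = (Gm A + Gm B) $$ (l,c)"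
    using l c unfolding Gm_def by auto
qed (auto simp: Gm_def)

lemma F_piece: assumes z: "z \<in> UP" shows "F (piece M z) = Gm (piece M z)"
proof (rule eq_matI)
  obtain i k where z0: "z = (i,k)" by (cases z)
  have i: "i < n" and k: "k < p" and up: "r \<le> k \<or> i \<le> k" using z z0 unfolding UP_def by auto
  fix l c assume "l < dim_row (Gm (piece M z))" "c < dim_col (Gm (piece M z))"
  then have l: "l < n" and c: "c < q" unfolding Gm_def by auto
  show "F (piece M z) $$ (l,c) = Gm (piece M z) $$ (l,c)"
  proof (cases "r \<le> k")
    case True
    have "F (piece M z) $$ (l,c) = (if l = i then M $$ (i,k) * xv k c else 0)"
      using P1[OF i True k l c] True z0 unfolding piece_def by simp
    moreover have "Gm (piece M z) $$ (l,c) = (if l = i then M $$ (i,k) * xv k c else 0)"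
      using True z0 l c k Rf_zero[OF c] unfolding piece_def Gm_def
      by (auto simp: sum_if_eq_single)
    ultimately show ?thesis by simp
  next
    case False
    show ?thesis
    proof (cases "i = k")
      case True
      have ir: "i < r" using False True by simp
      have "F (piece M z) $$ (l,c) = (if l = i then M $$ (i,i) * xv i c + Rf (M $$ (i,i)) c else 0)"
        using P2[OF ir l c] False True z0 unfolding piece_def by simp
      moreover have "Gm (piece M z) $$ (l,c) = (if l = i then M $$ (i,i) * xv i c + Rf (M $$ (i,i)) c else 0)"
        using False True z0 l c k ir Rf_zero[OF c] rp unfolding piece_def Gm_def
        by (auto simp: sum_if_eq_single)
      ultimately show ?thesis by simp
    next
      case ik: False
      have ir: "i < r" and kr: "k < r" using False up by auto
      have "F (piece M z) $$ (l,c) = (if l = i then M $$ (i,k) * xv k c else if l = k then M $$ (i,k) * xv i c else 0)"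
        using P3[OF ir kr ik l c] False ik z0 unfolding piece_def by simp
      moreover have "Gm (piece M z) $$ (l,c) = (if l = i then M $$ (i,k) * xv k c else if l = k then M $$ (i,k) * xv i c else 0)"
        using False ik z0 l c k ir kr Rf_zero[OF c] rp unfolding piece_def Gm_def
        by (auto simp: sum_if_eq_single)
      ultimately show ?thesis by simp
    qed
  qed
qed (use Fc piece_S[OF z] in \<open>auto simp: Gm_def\<close>)

lemma F_eq_Gm: assumes M: "M \<in> S" shows "F M = Gm M"
proof -
  have "F (cut Z M) = Gm (cut Z M)" if "Z \<subseteq> UP" for Z
  proof -
    have fin: "finite Z" using that finite_UP finite_subset by blast
    show ?thesis using fin that
    proof (induction Z rule: finite_induct)
      case empty
      have "F (0\<^sub>m n p) = Gm (0\<^sub>m n p)"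
        unfolding F_zero using rp by (intro eq_matI) (auto simp: Gm_def Rf_zero)
      then show ?case by (simp add: cut_empty)
    next
      case (insert z Z)
      have zU: "z \<in> UP" and ZU: "Z \<subseteq> UP" using insert.prems by auto
      have "F (cut (insert z Z) M) = F (cut Z M + piece M z)" using cut_insert[OF M ZU zU insert.hyps(2)] by simp
      also have "\<dots> = F (cut Z M) + F (piece M z)" using Fadd cut_S[OF M] piece_S[OF zU] by blast
      also have "\<dots> = Gm (cut Z M) + Gm (piece M z)" using insert.IH[OF ZU] F_piece[OF zU] by simp
      also have "\<dots> = Gm (cut Z M + piece M z)"
        using Gm_add[OF S_carrier[OF cut_S[OF M]] S_carrier[OF piece_S[OF zU]]] by simp
      also have "\<dots> = Gm (cut (insert z Z) M)" using cut_insert[OF M ZU zU insert.hyps(2)] by simp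
      finally show ?case .
    qed
  qed
  from this[of UP] show ?thesis using cut_UP[OF M] by simp
qed

end

context RC begin

definition Mt :: "(nat \<Rightarrow> 'a) \<Rightarrow> 'a \<Rightarrow> nat \<Rightarrow> 'a mat" where
  "Mt c a l = mat n p (\<lambda>(i,k). if k < r then (if i < r then (if k = l then c i else 0) + (if i = l then c k else 0)
       + (if i = l \<and> k = l then a else 0) else 0) else (if i = l then c k else 0))"

lemma Mt_S: "l < r \<Longrightarrow> Mt c a l \<in> S"
  using rn rp unfolding Mt_def sym_vee_set_def by (auto simp: add_ac)

lemma Mt_row_l: "l < r \<Longrightarrow> k < p \<Longrightarrow> Mt c a l $$ (l,k) = c k + (if k = l then c l + a else 0)"
  unfolding Mt_def using rn by auto

lemma Mt_row_k0: "l < r \<Longrightarrow> k0 < r \<Longrightarrow> k0 \<noteq> l \<Longrightarrow> k < p \<Longrightarrow> Mt c a l $$ (k0,k) = (if k = l then c k0 else 0)"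
  unfolding Mt_def using rn by auto

lemma test_lemma:
  assumes l: "l < r" and k0: "k0 < r" and kl: "k0 \<noteq> l" and ca: "c l + t * c k0 = a"
    and z: "\<forall>j<q. (\<Sum>k<p. c k * xv k j) + Rf a j = 0"
  shows "\<forall>k<p. c k = 0"
proof (intro allI impI)
  fix k assume k: "k < p"
  have lN: "l < n" and k0N: "k0 < n" and lp: "l < p" using l k0 rn rp by auto
  have M: "Mt c a l \<in> S" by (rule Mt_S[OF l])
  have "(c l + t * c k0) + a = 0" using ca c2 by blast
  then have aa: "c l + a + t * c k0 = 0" by (simp add: add_ac)
  have "1 * Mt c a l $$ (l,k) + t * Mt c a l $$ (k0,k) = 0"
  proof (rule ann2[OF M, of "\<lambda>i. if i = l then 1 else if i = k0 then t else 0", unfolded sum_two_points[OF lN k0N kl[symmetric]], OF _ k])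
    show "\<forall>j<q. 1 * F (Mt c a l) $$ (l, j) + t * F (Mt c a l) $$ (k0, j) = 0"
    proof (intro allI impI)
      fix j assume j: "j < q"
      have Gl: "Gm (Mt c a l) $$ (l,j) = (\<Sum>k<p. c k * xv k j) + (c l + a) * xv l j + Rf a j"
      proof -
        have "(\<Sum>k<p. Mt c a l $$ (l,k) * xv k j) = (\<Sum>k<p. c k * xv k j + (if k = l then c l + a else 0) * xv k j)"
          using Mt_row_l[OF l] by (intro sum.cong) (auto simp: distrib_right)
        also have "\<dots> = (\<Sum>k<p. c k * xv k j) + (c l + a) * xv l j"
          using lp by (simp add: sum.distrib sum_if_eq_single)
        finally have s: "(\<Sum>k<p. Mt c a l $$ (l,k) * xv k j) = (\<Sum>k<p. c k * xv k j) + (c l + a) * xv l j" .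
        have "Mt c a l $$ (l,l) = a" using Mt_row_l[OF l lp] two by simp
        then show ?thesis unfolding Gm_def using s lN j l by simp
      qed
      have Gk0: "Gm (Mt c a l) $$ (k0,j) = c k0 * xv l j"
      proof -
        have "(\<Sum>k<p. Mt c a l $$ (k0,k) * xv k j) = (\<Sum>k<p. (if k = l then c k0 else 0) * xv k j)"
          using Mt_row_k0[OF l k0 kl] by (intro sum.cong) auto
        also have "\<dots> = c k0 * xv l j" using lp by (simp add: sum_if_eq_single)
        finally have s: "(\<Sum>k<p. Mt c a l $$ (k0,k) * xv k j) = c k0 * xv l j" .
        have "Mt c a l $$ (k0,k0) = 0" using Mt_row_k0[OF l k0 kl] k0 rp kl by simp
        then show ?thesis unfolding Gm_def using s k0N j k0 Rf_zero[OF j] by simp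
      qed
      have "1 * Gm (Mt c a l) $$ (l,j) + t * Gm (Mt c a l) $$ (k0,j)
          = ((\<Sum>k<p. c k * xv k j) + Rf a j) + (c l + a + t * c k0) * xv l j"
        unfolding Gl Gk0 by (simp add: algebra_simps)
      also have "\<dots> = 0" using z j aa by simp
      finally show "1 * F (Mt c a l) $$ (l, j) + t * F (Mt c a l) $$ (k0, j) = 0"
        using F_eq_Gm[OF M] by simp
    qed
  qed
  moreover have "Mt c a l $$ (l,k) + t * Mt c a l $$ (k0,k) = c k"
    using Mt_row_l[OF l k] Mt_row_k0[OF l k0 kl k] aa by (auto simp: algebra_simps)
  ultimately show "c k = 0" by simp
qed

lemma condI:
  assumes z: "\<forall>j<q. (\<Sum>k<p. c k * xv k j) + Rf a j = 0" and k0: "k0 < r"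
  shows "c k0 = 0"
proof (rule ccontr)
  assume ne: "c k0 \<noteq> 0"
  define l where "l = oth k0"
  have l: "l < r" and kl: "k0 \<noteq> l" using oth[OF k0] unfolding l_def by auto
  define t where "t = (a - c l) / c k0"
  have "c l + t * c k0 = a" unfolding t_def using ne by simp
  then have "\<forall>k<p. c k = 0" using test_lemma[OF l k0 kl _ z] by blast
  then show False using ne k0 rp by auto
qed

lemma condII:
  assumes z: "\<forall>j<q. (\<Sum>k<p. c k * xv k j) = 0"
  shows "\<forall>k<p. c k = 0"
proof -
  have z': "\<forall>j<q. (\<Sum>k<p. c k * xv k j) + Rf 0 j = 0" using z Rf_zero by simp
  have c0: "c 0 = 0" using condI[OF z', of 0] r2 by simp
  have r0: "0 < r" and r1: "1 < r" using r2 by auto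
  show ?thesis using test_lemma[OF r0 r1 _ _ z', of 0] c0 by simp
qed

end

context vec_space begin

lemma extend_indpt:
  assumes ST: "S \<subseteq> T" and T: "T \<subseteq> carrier_vec n" and S: "lin_indpt S"
  shows "\<exists>J. S \<subseteq> J \<and> J \<subseteq> T \<and> lin_indpt J \<and> finite J \<and> T \<subseteq> span J"
proof -
  let ?P = "\<lambda>B. S \<subseteq> B \<and> B \<subseteq> T \<and> lin_indpt B"
  have bnd: "finite B \<and> card B \<le> n" if "?P B" for B
    using li_le_dim[of B] that T by (auto simp: dim_is_n)
  obtain J where J: "finite J" "maximal J ?P"
    using maximal_exists[of ?P n S, OF bnd] ST S by blast
  have PJ: "?P J" using J(2) unfolding maximal_def by blast
  have "T \<subseteq> span J"
  proof
    fix u assume u: "u \<in> T"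
    show "u \<in> span J"
    proof (rule ccontr)
      assume nu: "u \<notin> span J"
      have JC: "J \<subseteq> carrier_vec n" using PJ T by auto
      have uJ: "u \<notin> J" using nu span_mem[OF JC] by blast
      have "lin_indpt (J \<union> {u})"
        using lin_dep_iff_in_span[OF JC _ _ uJ] PJ nu u T by auto
      then have "?P (J \<union> {u})" using PJ u by auto
      then have "J \<union> {u} = J" using J(2) unfolding maximal_def by blast
      then show False using uJ by auto
    qed
  qed
  then show ?thesis using PJ J(1) by blast
qed

lemma lincomb_list_rep:
  assumes d: "distinct L" and LC: "set L \<subseteq> carrier_vec n" and A: "A \<subseteq> set L" and j: "j < n"
  shows "lincomb a A $ j = (\<Sum>l<length L. (if L ! l \<in> A then a (L ! l) else 0) * L ! l $ j)"
proof -
  have AC: "A \<subseteq> carrier_vec n" using A LC by auto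
  have "lincomb a A $ j = (\<Sum>x\<in>A. a x * x $ j)" by (rule lincomb_index[OF j AC])
  also have "\<dots> = (\<Sum>l\<in>{l. l < length L \<and> L ! l \<in> A}. a (L ! l) * L ! l $ j)"
  proof (rule sum.reindex_bij_betw[symmetric])
    show "bij_betw (\<lambda>l. L ! l) {l. l < length L \<and> L ! l \<in> A} A"
    proof (rule bij_betwI')
      show "\<And>x y. x \<in> {l. l < length L \<and> L ! l \<in> A} \<Longrightarrow> y \<in> {l. l < length L \<and> L ! l \<in> A} \<Longrightarrow> (L ! x = L ! y) = (x = y)"
        using d by (auto simp: nth_eq_iff_index_eq)
      show "\<And>x. x \<in> {l. l < length L \<and> L ! l \<in> A} \<Longrightarrow> L ! x \<in> A" by auto
      show "\<And>y. y \<in> A \<Longrightarrow> \<exists>x\<in>{l. l < length L \<and> L ! l \<in> A}. y = L ! x"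
        using A by (force simp: in_set_conv_nth)
    qed
  qed
  also have "\<dots> = (\<Sum>l<length L. (if L ! l \<in> A then a (L ! l) else 0) * L ! l $ j)"
  proof -
    have "(\<Sum>l<length L. (if L ! l \<in> A then a (L ! l) else 0) * L ! l $ j)
        = (\<Sum>l\<in>{..<length L} \<inter> {l. L ! l \<in> A}. a (L ! l) * L ! l $ j)"
    proof -
      have "(\<Sum>l<length L. (if L ! l \<in> A then a (L ! l) else 0) * L ! l $ j)
          = (\<Sum>l<length L. if L ! l \<in> A then a (L ! l) * L ! l $ j else 0)"
        by (intro sum.cong) auto
      then show ?thesis by (simp add: sum.inter_restrict)
    qed
    also have "{..<length L} \<inter> {l. L ! l \<in> A} = {l. l < length L \<and> L ! l \<in> A}" by auto
    finally show ?thesis by simp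
  qed
  finally show ?thesis .
qed

end


lemma sum_R_comm:
  fixes Rv :: "'a::field \<Rightarrow> nat \<Rightarrow> 'a"
  assumes Radd: "\<And>x y. Rv (x + y) j = Rv x j + Rv y j" and fin: "finite B"
  shows "(\<Sum>v\<in>B. Rv (g v) j) = Rv (\<Sum>v\<in>B. g v) j"
  using fin
proof (induction B rule: finite_induct)
  case empty
  have "Rv 0 j = 0" using Radd[of 0 0] by (metis add_cancel_right_right add_0)
  then show ?case by simp
next
  case (insert x F)
  then show ?case by (simp add: Radd)
qed

lemma LA:
  fixes xs :: "nat \<Rightarrow> nat \<Rightarrow> 'a::field" and Rv :: "'a \<Rightarrow> nat \<Rightarrow> 'a"
  assumes rp: "r \<le> p"
    and Radd: "\<And>x y j. j < q \<Longrightarrow> Rv (x + y) j = Rv x j + Rv y j"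
    and Rroot: "\<And>l x j. j < q \<Longrightarrow> Rv (l^2 * x) j = l * Rv x j"
    and I: "\<And>c a. \<forall>j<q. (\<Sum>k<p. c k * xs k j) + Rv a j = 0 \<Longrightarrow> \<forall>k<r. c k = 0"
    and II: "\<And>c. \<forall>j<q. (\<Sum>k<p. c k * xs k j) = 0 \<Longrightarrow> \<forall>k<p. c k = 0"
  shows "p \<le> q \<and> (\<exists>Q \<in> carrier_mat q q. invertible_mat Q \<and> (\<forall>k<p. \<forall>j<q. Q $$ (k,j) = xs k j) \<and>
     (\<forall>a. \<exists>d. (\<forall>l<r. d l = 0) \<and> (\<forall>j<q. Rv a j = (\<Sum>l<q. d l * Q $$ (l,j)))))"
proof -
  interpret V: vec_space "TYPE('a)" q .
  define xv where "xv k = vec q (xs k)" for k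
  define Xs where "Xs = xv ` {..<p}"
  define X0 where "X0 = xv ` {..<r}"
  define Xr where "Xr = xv ` {r..<p}"
  define W where "W = {vec q (Rv a) | a. True}"
  have xvC: "xv k \<in> carrier_vec q" for k unfolding xv_def by auto
  have XsC: "Xs \<subseteq> carrier_vec q" unfolding Xs_def using xvC by auto
  have WC: "W \<subseteq> carrier_vec q" unfolding W_def by auto
  have Rneg: "Rv a j = - Rv a j" if "j < q" for a j
    using Rroot[OF that, of "-1" a] by simp
  have inj: "inj_on xv {..<p}"
  proof (rule inj_onI)
    fix a b assume a: "a \<in> {..<p}" and b: "b \<in> {..<p}" and e: "xv a = xv b"
    show "a = b"
    proof (rule ccontr)
      assume ab: "a \<noteq> b"
      define c where "c k = (if k = a then 1 else if k = b then -1 else (0::'a))" for k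
      have "\<forall>j<q. (\<Sum>k<p. c k * xs k j) = 0"
      proof (intro allI impI)
        fix j assume j: "j < q"
        have "xs a j = xs b j" using arg_cong[OF e, of "\<lambda>v. v $ j"] j unfolding xv_def by simp
        moreover have "(\<Sum>k<p. c k * xs k j) = 1 * xs a j + (-1) * xs b j"
          unfolding c_def by (rule sum_two_points) (use a b ab in auto)
        ultimately show "(\<Sum>k<p. c k * xs k j) = 0" by simp
      qed
      then have "c a = 0" using II a by blast
      then show False unfolding c_def by simp
    qed
  qed
  define L1 where "L1 = map xv [0..<p]"
  have L1d: "distinct L1" unfolding L1_def using inj by (simp add: distinct_map atLeast0LessThan)
  have L1s: "set L1 = Xs" unfolding L1_def Xs_def by auto
  have L1n: "\<And>k. k < p \<Longrightarrow> L1 ! k = xv k" unfolding L1_def by simp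
  have lcX: "V.lincomb a A $ j = (\<Sum>k<p. (if xv k \<in> A then a (xv k) else 0) * xs k j)"
    if "A \<subseteq> Xs" "j < q" for a A j
  proof -
    have "V.lincomb a A $ j = (\<Sum>k<length L1. (if L1 ! k \<in> A then a (L1 ! k) else 0) * L1 ! k $ j)"
      by (rule V.lincomb_list_rep[OF L1d]) (use L1s XsC that in auto)
    also have "\<dots> = (\<Sum>k<p. (if xv k \<in> A then a (xv k) else 0) * xs k j)"
      unfolding L1_def using that(2) by (intro sum.cong) (auto simp: xv_def)
    finally show ?thesis .
  qed
  have indXs: "V.lin_indpt Xs"
  proof
    assume "V.lin_dep Xs"
    then obtain A a v where A: "finite A" "A \<subseteq> Xs" "V.lincomb a A = 0\<^sub>v q" "v \<in> A" "a v \<noteq> 0"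
      unfolding V.lin_dep_def by auto
    define c where "c k = (if xv k \<in> A then a (xv k) else 0)" for k
    have "\<forall>j<q. (\<Sum>k<p. c k * xs k j) = 0"
      using lcX[OF A(2)] A(3) unfolding c_def by (metis index_zero_vec(1))
    then have c0: "\<forall>k<p. c k = 0" by (rule II)
    obtain k where k: "k < p" "v = xv k" using A(2,4) unfolding Xs_def by auto
    then show False using c0 A(4,5) unfolding c_def by auto
  qed
  have XrXs: "Xr \<subseteq> Xs" and X0Xs: "X0 \<subseteq> Xs" unfolding Xr_def Xs_def X0_def using rp by auto
  have XsU: "Xs = X0 \<union> Xr"
  proof -
    have "{..<p} = {..<r} \<union> {r..<p}" using rp by auto
    then show ?thesis unfolding Xr_def Xs_def X0_def by (simp add: image_Un)
  qed
  have indXr: "V.lin_indpt Xr" using V.subset_li_is_li[OF indXs XrXs] .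
  have "\<exists>J. Xr \<subseteq> J \<and> J \<subseteq> Xr \<union> W \<and> V.lin_indpt J \<and> finite J \<and> Xr \<union> W \<subseteq> V.span J"
    by (rule V.extend_indpt[OF _ _ indXr]) (use XrXs XsC WC in auto)
  then obtain J where J: "Xr \<subseteq> J" "J \<subseteq> Xr \<union> W" "V.lin_indpt J" "finite J" "Xr \<union> W \<subseteq> V.span J"
    by (elim exE conjE)
  define s where "s w = (SOME a. w = vec q (Rv a))" for w
  have s: "w = vec q (Rv (s w))" if w: "w \<in> W" for w
  proof -
    obtain a where "w = vec q (Rv a)" using w unfolding W_def by blast
    then show ?thesis unfolding s_def by (rule someI)
  qed
  have X0W: "xv l \<notin> W" if l: "l < r" for l
  proof
    assume "xv l \<in> W"
    then have e: "xv l = vec q (Rv (s (xv l)))" using s by blast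
    define c where "c k = (if k = l then 1 else (0::'a))" for k
    have "\<forall>j<q. (\<Sum>k<p. c k * xs k j) + Rv (s (xv l)) j = 0"
    proof (intro allI impI)
      fix j assume j: "j < q"
      have "(\<Sum>k<p. c k * xs k j) = xs l j" unfolding c_def using l rp sum_delta_left'[of l p "\<lambda>k. xs k j"] by simp
      moreover have "xs l j = Rv (s (xv l)) j" using arg_cong[OF e, of "\<lambda>v. v $ j"] j unfolding xv_def by simp
      ultimately show "(\<Sum>k<p. c k * xs k j) + Rv (s (xv l)) j = 0" using Rneg[OF j] by (metis add.right_inverse)
    qed
    then have "c l = 0" using I l by blast
    then show False unfolding c_def by simp
  qed
  have X0J: "xv l \<notin> J" if l: "l < r" for l
  proof
    assume "xv l \<in> J"
    then have "xv l \<in> Xr \<or> xv l \<in> W" using J(2) by auto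
    moreover have "xv l \<notin> Xr"
    proof
      assume "xv l \<in> Xr"
      then obtain k where k: "k \<in> {r..<p}" "xv l = xv k" unfolding Xr_def by auto
      then have "l = k" using inj l rp by (intro inj_onD[OF inj]) auto
      then show False using k l by auto
    qed
    ultimately show False using X0W[OF l] by auto
  qed
  have JC: "J \<subseteq> carrier_vec q" using J(2) XrXs XsC WC by auto
  have indXJ: "V.lin_indpt (X0 \<union> J)"
  proof
    assume "V.lin_dep (X0 \<union> J)"
    then obtain A a v where A: "finite A" "A \<subseteq> X0 \<union> J" "V.lincomb a A = 0\<^sub>v q" "v \<in> A" "a v \<noteq> 0"
      unfolding V.lin_dep_def by auto
    define A0 where "A0 = A \<inter> X0"
    define A1 where "A1 = A - X0"
    define A1r where "A1r = A1 \<inter> Xr"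
    define A2 where "A2 = A1 - Xr"
    have A2W: "A2 \<subseteq> W" using A(2) J(2) unfolding A2_def A1_def by auto
    have AC: "A \<subseteq> carrier_vec q" using A(2) X0Xs XsC JC by auto
    have finA0: "finite A0" and finA1: "finite A1" and finA1r: "finite A1r" and finA2: "finite A2"
      using A(1) unfolding A0_def A1_def A1r_def A2_def by auto
    have sumA: "(\<Sum>x\<in>A. a x * x $ j) = 0" if j: "j < q" for j
      using V.lincomb_index[OF j AC, of a] A(3) j by simp
    define c where "c k = (if xv k \<in> A0 \<union> A1r then a (xv k) else 0)" for k
    define \<sigma> where "\<sigma> = (\<Sum>w\<in>A2. (a w)^2 * s w)"
    have key: "\<forall>j<q. (\<Sum>k<p. c k * xs k j) + Rv \<sigma> j = 0"
    proof (intro allI impI)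
      fix j assume j: "j < q"
      have AU: "A = (A0 \<union> A1r) \<union> A2" unfolding A0_def A1_def A1r_def A2_def by auto
      have "(\<Sum>x\<in>A. a x * x $ j) = (\<Sum>x\<in>A0 \<union> A1r. a x * x $ j) + (\<Sum>x\<in>A2. a x * x $ j)"
        unfolding AU by (rule sum.union_disjoint) (use finA0 finA1r finA2 in \<open>auto simp: A0_def A1_def A1r_def A2_def\<close>)
      moreover have "(\<Sum>x\<in>A0 \<union> A1r. a x * x $ j) = (\<Sum>k<p. c k * xs k j)"
      proof -
        have sub: "A0 \<union> A1r \<subseteq> Xs" unfolding A0_def A1r_def using X0Xs XrXs by auto
        have "(\<Sum>x\<in>A0 \<union> A1r. a x * x $ j) = V.lincomb a (A0 \<union> A1r) $ j"
        proof -
          have sC: "A0 \<union> A1r \<subseteq> carrier_vec q" using sub XsC by auto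
          show ?thesis using V.lincomb_index[OF j sC, of a] by (rule sym)
        qed
        also have "\<dots> = (\<Sum>k<p. c k * xs k j)" unfolding c_def by (rule lcX[OF sub j])
        finally show ?thesis .
      qed
      moreover have "(\<Sum>x\<in>A2. a x * x $ j) = Rv \<sigma> j"
      proof -
        have "(\<Sum>x\<in>A2. a x * x $ j) = (\<Sum>x\<in>A2. Rv ((a x)^2 * s x) j)"
        proof (rule sum.cong[OF refl])
          fix x assume x: "x \<in> A2"
          have e: "x = vec q (Rv (s x))" using s A2W x by blast
          have "x $ j = vec q (Rv (s x)) $ j" using arg_cong[OF e, of "\<lambda>v. v $ j"] .
          also have "\<dots> = Rv (s x) j" using j by (rule index_vec)
          finally have "x $ j = Rv (s x) j" .
          then show "a x * x $ j = Rv ((a x)^2 * s x) j" using Rroot[OF j] by simp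
        qed
        also have "\<dots> = Rv \<sigma> j" unfolding \<sigma>_def by (rule sum_R_comm[where Rv=Rv, OF Radd[OF j] finA2])
        finally show ?thesis .
      qed
      ultimately show "(\<Sum>k<p. c k * xs k j) + Rv \<sigma> j = 0" using sumA[OF j] by simp
    qed
    have c0: "\<forall>k<r. c k = 0" by (rule I[OF key])
    have a0: "a x = 0" if x: "x \<in> A0" for x
    proof -
      obtain k where k: "k < r" "x = xv k" using x unfolding A0_def X0_def by auto
      then show ?thesis using c0 x unfolding c_def by auto
    qed
    have lc1: "V.lincomb a A1 = 0\<^sub>v q"
    proof (rule eq_vecI)
      have A1C: "A1 \<subseteq> carrier_vec q" using AC unfolding A1_def by auto
      show "dim_vec (V.lincomb a A1) = dim_vec (0\<^sub>v q)" using V.lincomb_dim[OF finA1 A1C] by simp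
      fix j assume "j < dim_vec (0\<^sub>v q)"
      then have j: "j < q" by simp
      have AU: "A = A0 \<union> A1" unfolding A0_def A1_def by auto
      have "(\<Sum>x\<in>A. a x * x $ j) = (\<Sum>x\<in>A0. a x * x $ j) + (\<Sum>x\<in>A1. a x * x $ j)"
        unfolding AU by (rule sum.union_disjoint) (use finA0 finA1 in \<open>auto simp: A0_def A1_def\<close>)
      moreover have "(\<Sum>x\<in>A0. a x * x $ j) = 0" using a0 by simp
      ultimately have "(\<Sum>x\<in>A1. a x * x $ j) = 0" using sumA[OF j] by simp
      then show "V.lincomb a A1 $ j = 0\<^sub>v q $ j" using V.lincomb_index[OF j A1C] j by simp
    qed
    have a1: "a x = 0" if x: "x \<in> A1" for x
    proof (rule ccontr)
      assume "a x \<noteq> 0"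
      then have "V.lin_dep J" unfolding V.lin_dep_def
        using finA1 lc1 x A(2) unfolding A1_def by blast
      then show False using J(3) by simp
    qed
    show False using A(4,5) a0 a1 unfolding A0_def A1_def by auto
  qed
  have X0JC: "X0 \<union> J \<subseteq> carrier_vec q" using X0Xs XsC JC by auto
  have "\<exists>B. X0 \<union> J \<subseteq> B \<and> B \<subseteq> carrier_vec q \<and> V.lin_indpt B \<and> finite B \<and> carrier_vec q \<subseteq> V.span B"
    by (rule V.extend_indpt[OF X0JC _ indXJ]) simp
  then obtain B where B: "X0 \<union> J \<subseteq> B" "B \<subseteq> carrier_vec q" "V.lin_indpt B" "finite B" "carrier_vec q \<subseteq> V.span B"
    by (elim exE conjE)
  have cardB: "card B = q"
  proof -
    have "card B \<le> q" using V.li_le_dim(2)[OF _ B(2,3)] V.dim_is_n by simp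
    moreover have "V.span B = carrier_vec q" using B(5) V.span_is_subset2[OF B(2)] by auto
    then have "card B \<ge> q" using V.gen_ge_dim[OF B(4,2)] V.dim_is_n by simp
    ultimately show ?thesis by simp
  qed
  have XsB: "Xs \<subseteq> B" using B(1) J(1) XsU by auto
  have pq: "p \<le> q"
  proof -
    have "card Xs = p" unfolding Xs_def using card_image[OF inj] by simp
    then show ?thesis using card_mono[OF B(4) XsB] cardB by simp
  qed
  obtain L2 where L2: "distinct L2" "set L2 = B - Xs" using finite_distinct_list[of "B - Xs"] B(4) by auto
  define L where "L = L1 @ L2"
  have Ld: "distinct L" unfolding L_def using L1d L2 L1s by auto
  have Ls: "set L = B" unfolding L_def using L1s L2 XsB by auto
  have Llen: "length L = q" using distinct_card[OF Ld] Ls cardB by simp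
  have LC: "set L \<subseteq> carrier_vec q" using Ls B(2) by simp
  have Lk: "L ! k = xv k" if "k < p" for k unfolding L_def using L1n[OF that] that by (simp add: nth_append L1_def)
  define Q where "Q = mat_of_rows q L"
  have Qc: "Q \<in> carrier_mat q q" unfolding Q_def using Llen by (metis mat_of_rows_carrier(1))
  have Qidx: "Q $$ (l,j) = L ! l $ j" if "l < q" "j < q" for l j
    unfolding Q_def mat_of_rows_def using that Llen by simp
  have rep: "V.lincomb a A $ j = (\<Sum>l<q. (if L ! l \<in> A then a (L ! l) else 0) * Q $$ (l,j))"
    if A: "A \<subseteq> B" and j: "j < q" for a A j
  proof -
    have "V.lincomb a A $ j = (\<Sum>l<length L. (if L ! l \<in> A then a (L ! l) else 0) * L ! l $ j)"
      by (rule V.lincomb_list_rep[OF Ld LC]) (use A Ls j in auto)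
    also have "\<dots> = (\<Sum>l<q. (if L ! l \<in> A then a (L ! l) else 0) * Q $$ (l,j))"
      using Llen Qidx j by (intro sum.cong) auto
    finally show ?thesis .
  qed
  have "\<forall>j<q. \<exists>d. \<forall>m<q. unit_vec q j $ m = (\<Sum>l<q. d l * Q $$ (l,m))"
  proof (intro allI impI)
    fix j assume j: "j < q"
    have "unit_vec q j \<in> V.span B" using B(5) by auto
    then obtain A a where A: "finite A" "A \<subseteq> B" "unit_vec q j = V.lincomb a A"
      unfolding V.span_def by auto
    show "\<exists>d. \<forall>m<q. unit_vec q j $ m = (\<Sum>l<q. d l * Q $$ (l,m))"
      using rep[OF A(2)] A(3) by auto
  qed
  then obtain D where D: "\<And>j m. j < q \<Longrightarrow> m < q \<Longrightarrow> unit_vec q j $ m = (\<Sum>l<q. D j l * Q $$ (l,m))"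
    by metis
  define C where "C = mat q q (\<lambda>(j,l). D j l)"
  have Cc: "C \<in> carrier_mat q q" unfolding C_def by auto
  have CQ: "C * Q = 1\<^sub>m q"
  proof (rule eq_matI)
    fix j m assume "j < dim_row (1\<^sub>m q :: 'a mat)" "m < dim_col (1\<^sub>m q :: 'a mat)"
    then have j: "j < q" and m: "m < q" by auto
    have "(C * Q) $$ (j,m) = (\<Sum>l<q. D j l * Q $$ (l,m))"
      using j m Qc unfolding C_def by (simp add: scalar_prod_def lessThan_atLeast0)
    also have "\<dots> = unit_vec q j $ m" using D[OF j m] by simp
    finally show "(C * Q) $$ (j,m) = 1\<^sub>m q $$ (j,m)" using j m by auto
  qed (use Qc in \<open>auto simp: C_def\<close>)
  have QC: "Q * C = 1\<^sub>m q" by (rule mat_mult_left_right_inverse[OF Cc Qc CQ])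
  have Qinv: "invertible_mat Q"
    unfolding invertible_mat_def inverts_mat_def using Qc Cc QC CQ by (auto intro!: exI[of _ C])
  have Qx: "\<forall>k<p. \<forall>j<q. Q $$ (k,j) = xs k j"
    using Qidx Lk pq unfolding xv_def by auto
  have QW: "\<forall>a. \<exists>d. (\<forall>l<r. d l = 0) \<and> (\<forall>j<q. Rv a j = (\<Sum>l<q. d l * Q $$ (l,j)))"
  proof
    fix a
    have "vec q (Rv a) \<in> W" unfolding W_def by auto
    then have "vec q (Rv a) \<in> V.span J" using J(5) by auto
    then obtain A b where A: "finite A" "A \<subseteq> J" "vec q (Rv a) = V.lincomb b A"
      unfolding V.span_def by auto
    have AB: "A \<subseteq> B" using A(2) B(1) by auto
    define d where "d l = (if L ! l \<in> A then b (L ! l) else 0)" for l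
    have "\<forall>l<r. d l = 0"
    proof (intro allI impI)
      fix l assume l: "l < r"
      have "L ! l = xv l" using Lk l rp by simp
      then show "d l = 0" unfolding d_def using X0J[OF l] A(2) by auto
    qed
    moreover have "\<forall>j<q. Rv a j = (\<Sum>l<q. d l * Q $$ (l,j))"
    proof (intro allI impI)
      fix j assume j: "j < q"
      have "Rv a j = vec q (Rv a) $ j" using j by simp
      also have "\<dots> = V.lincomb b A $ j" using A(3) by simp
      also have "\<dots> = (\<Sum>l<q. d l * Q $$ (l,j))" unfolding d_def by (rule rep[OF AB j])
      finally show "Rv a j = (\<Sum>l<q. d l * Q $$ (l,j))" .
    qed
    ultimately show "\<exists>d. (\<forall>l<r. d l = 0) \<and> (\<forall>j<q. Rv a j = (\<Sum>l<q. d l * Q $$ (l,j)))" by blast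
  qed
  show ?thesis using pq Qc Qinv Qx QW by blast
qed

lemma hard_dir:
  fixes F :: "'a :: field mat \<Rightarrow> 'a mat"
  assumes RC: "RC F n p q r"
  shows "p \<le> q \<and>
          (\<exists>Q R. Q \<in> carrier_mat q q \<and> invertible_mat Q \<and>
                 (\<forall>x. R x \<in> carrier_vec (q - r)) \<and> root_linear R \<and>
                 (\<forall>M \<in> sym_vee_set r n p. F M = (pad_cols q M + root_corr r q R M) * Q))"
proof -
  interpret RC F n p q r by (rule RC)
  have LA': "p \<le> q \<and> (\<exists>Q \<in> carrier_mat q q. invertible_mat Q \<and> (\<forall>k<p. \<forall>j<q. Q $$ (k,j) = xv k j) \<and>
     (\<forall>a. \<exists>d. (\<forall>l<r. d l = 0) \<and> (\<forall>j<q. Rf a j = (\<Sum>l<q. d l * Q $$ (l,j)))))"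
  proof (rule LA[OF rp])
    show "\<And>x y j. j < q \<Longrightarrow> Rf (x + y) j = Rf x j + Rf y j" by (rule Rf_add)
    show "\<And>l x j. j < q \<Longrightarrow> Rf (l^2 * x) j = l * Rf x j" using Rf_root by (simp add: mult.commute)
    show "\<And>c a. \<forall>j<q. (\<Sum>k<p. c k * xv k j) + Rf a j = 0 \<Longrightarrow> \<forall>k<r. c k = 0" using condI by blast
    show "\<And>c. \<forall>j<q. (\<Sum>k<p. c k * xv k j) = 0 \<Longrightarrow> \<forall>k<p. c k = 0" using condII by blast
  qed
  then obtain Q where pq: "p \<le> q" and Qc: "Q \<in> carrier_mat q q" and Qinv: "invertible_mat Q"
    and Qx: "\<forall>k<p. \<forall>j<q. Q $$ (k,j) = xv k j"
    and QW: "\<forall>a. \<exists>d. (\<forall>l<r. d l = 0) \<and> (\<forall>j<q. Rf a j = (\<Sum>l<q. d l * Q $$ (l,j)))"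
    by blast
  obtain Qi where Qic: "Qi \<in> carrier_mat q q" and QQi: "Q * Qi = 1\<^sub>m q"
    using invertible_right_inv[OF Qc Qinv] by blast
  define coord where "coord a m = (\<Sum>j<q. Rf a j * Qi $$ (j,m))" for a m
  have coord_d: "coord a m = d m"
    if d: "\<forall>j<q. Rf a j = (\<Sum>l<q. d l * Q $$ (l,j))" and m: "m < q" for a m d
  proof -
    have "coord a m = (\<Sum>j<q. \<Sum>l<q. d l * (Q $$ (l,j) * Qi $$ (j,m)))"
      unfolding coord_def using d by (simp add: sum_distrib_right mult.assoc)
    also have "\<dots> = (\<Sum>l<q. d l * (\<Sum>j<q. Q $$ (l,j) * Qi $$ (j,m)))"
      by (subst sum.swap) (simp add: sum_distrib_left)
    also have "\<dots> = (\<Sum>l<q. d l * (if l = m then 1 else 0))"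
    proof (rule sum.cong[OF refl])
      fix l assume l: "l \<in> {..<q}"
      have "(\<Sum>j<q. Q $$ (l,j) * Qi $$ (j,m)) = (Q * Qi) $$ (l,m)"
        using l m Qc Qic by (simp add: scalar_prod_def lessThan_atLeast0)
      also have "\<dots> = (if l = m then 1 else 0)" using QQi l m by simp
      finally show "d l * (\<Sum>j<q. Q $$ (l,j) * Qi $$ (j,m)) = d l * (if l = m then 1 else 0)" by simp
    qed
    also have "\<dots> = d m" using m by (rule sum_delta_right)
    finally show ?thesis .
  qed
  have coord0: "coord a l = 0" if "l < r" "l < q" for a l
  proof -
    obtain d where d: "\<forall>l<r. d l = 0" "\<forall>j<q. Rf a j = (\<Sum>l<q. d l * Q $$ (l,j))" using QW by blast
    show ?thesis using coord_d[OF d(2) that(2)] d(1) that(1) by simp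
  qed
  have coordQ: "(\<Sum>l<q. coord a l * Q $$ (l,j)) = Rf a j" if j: "j < q" for a j
  proof -
    obtain d where d: "\<forall>l<r. d l = 0" "\<forall>j<q. Rf a j = (\<Sum>l<q. d l * Q $$ (l,j))" using QW by blast
    have "(\<Sum>l<q. coord a l * Q $$ (l,j)) = (\<Sum>l<q. d l * Q $$ (l,j))"
      using coord_d[OF d(2)] by (intro sum.cong) auto
    then show ?thesis using d(2) j by simp
  qed
  define R' where "R' x = vec (q - r) (\<lambda>t. coord x (r + t))" for x
  have R'c: "\<forall>x. R' x \<in> carrier_vec (q - r)" unfolding R'_def by auto
  have coord_add: "coord (x + y) m = coord x m + coord y m" for x y m
    unfolding coord_def by (simp add: Rf_add distrib_right sum.distrib)
  have coord_root: "coord (l^2 * x) m = l * coord x m" for l x m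
  proof -
    have "coord (l^2 * x) m = (\<Sum>j<q. l * (Rf x j * Qi $$ (j,m)))"
      unfolding coord_def
    proof (intro sum.cong[OF refl])
      fix j assume j: "j \<in> {..<q}"
      have "Rf (l^2 * x) j = l * Rf x j" using Rf_root[of j x l] j by (simp add: mult.commute)
      then show "Rf (l^2 * x) j * Qi $$ (j,m) = l * (Rf x j * Qi $$ (j,m))" by simp
    qed
    then show ?thesis unfolding coord_def by (simp add: sum_distrib_left)
  qed
  have R'l: "root_linear R'"
    unfolding root_linear_def R'_def using coord_add coord_root by (auto intro!: eq_vecI)
  have FM: "\<forall>M \<in> sym_vee_set r n p. F M = (pad_cols q M + root_corr r q R' M) * Q"
  proof
    fix M :: "'a mat" assume M: "M \<in> sym_vee_set r n p"
    have Mc: "M \<in> carrier_mat n p" using M by (rule S_carrier)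
    show "F M = (pad_cols q M + root_corr r q R' M) * Q"
    proof (rule eq_matI)
      fix i c assume "i < dim_row ((pad_cols q M + root_corr r q R' M) * Q)"
        "c < dim_col ((pad_cols q M + root_corr r q R' M) * Q)"
      then have i: "i < n" and c: "c < q" using Mc Qc unfolding root_corr_def by auto
      have "((pad_cols q M + root_corr r q R' M) * Q) $$ (i,c)
          = (\<Sum>l<q. (pad_cols q M + root_corr r q R' M) $$ (i,l) * Q $$ (l,c))"
        using i c Mc Qc unfolding root_corr_def by (simp add: scalar_prod_def lessThan_atLeast0)
      also have "\<dots> = (\<Sum>l<q. (if l < p then M $$ (i,l) * Q $$ (l,c) else 0))
          + (\<Sum>l<q. (if i < r \<and> r \<le> l then coord (M $$ (i,i)) l * Q $$ (l,c) else 0))"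
        unfolding sum.distrib[symmetric] using i c Mc unfolding pad_cols_def root_corr_def R'_def
        by (intro sum.cong) (auto simp: distrib_right)
      also have "(\<Sum>l<q. (if l < p then M $$ (i,l) * Q $$ (l,c) else 0)) = (\<Sum>k<p. M $$ (i,k) * xv k c)"
        using sum_lessThan_restrict[OF pq, of "\<lambda>l. M $$ (i,l) * Q $$ (l,c)"] Qx c by simp
      also have "(\<Sum>l<q. (if i < r \<and> r \<le> l then coord (M $$ (i,i)) l * Q $$ (l,c) else 0))
          = (if i < r then Rf (M $$ (i,i)) c else 0)"
      proof (cases "i < r")
        case True
        have "(\<Sum>l<q. (if i < r \<and> r \<le> l then coord (M $$ (i,i)) l * Q $$ (l,c) else 0))
            = (\<Sum>l<q. coord (M $$ (i,i)) l * Q $$ (l,c))"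
          using True coord0 by (intro sum.cong) auto
        then show ?thesis using coordQ[OF c] True by simp
      qed simp
      also have "(\<Sum>k<p. M $$ (i,k) * xv k c) + (if i < r then Rf (M $$ (i,i)) c else 0) = F M $$ (i,c)"
        using F_eq_Gm[OF M] i c unfolding Gm_def by simp
      finally show "F M $$ (i,c) = ((pad_cols q M + root_corr r q R' M) * Q) $$ (i,c)" by simp
    qed (use Fc M Qc Mc in \<open>auto simp: root_corr_def\<close>)
  qed
  show ?thesis using pq Qc Qinv R'c R'l FM by blast
qed

theorem theorem7p7:
  fixes n p q r :: nat and F :: "'a :: field mat \<Rightarrow> 'a mat"
  assumes "CHAR('a) = 2"
    and "2 \<le> r" and "r \<le> n" and "r \<le> p"
    and "1 \<le> q"
  shows "((\<forall>M \<in> sym_vee_set r n p. F M \<in> carrier_mat n q) \<and>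
          (\<forall>M \<in> sym_vee_set r n p. \<forall>N \<in> sym_vee_set r n p. F (M + N) = F M + F N) \<and>
          range_preserving_on (sym_vee_set r n p) F)
     \<longleftrightarrow>
         (p \<le> q \<and>
          (\<exists>Q R. Q \<in> carrier_mat q q \<and> invertible_mat Q \<and>
                 (\<forall>x. R x \<in> carrier_vec (q - r)) \<and> root_linear R \<and>
                 (\<forall>M \<in> sym_vee_set r n p. F M = (pad_cols q M + root_corr r q R M) * Q)))"
proof
  assume H: "(\<forall>M \<in> sym_vee_set r n p. F M \<in> carrier_mat n q) \<and>
          (\<forall>M \<in> sym_vee_set r n p. \<forall>N \<in> sym_vee_set r n p. F (M + N) = F M + F N) \<and>
          range_preserving_on (sym_vee_set r n p) F"
  have "RC F n p q r"
    unfolding RC_def using H assms char2_two[OF assms(1)] by blast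
  then show "p \<le> q \<and>
          (\<exists>Q R. Q \<in> carrier_mat q q \<and> invertible_mat Q \<and>
                 (\<forall>x. R x \<in> carrier_vec (q - r)) \<and> root_linear R \<and>
                 (\<forall>M \<in> sym_vee_set r n p. F M = (pad_cols q M + root_corr r q R M) * Q))"
    by (rule hard_dir)
next
  assume H: "p \<le> q \<and>
          (\<exists>Q R. Q \<in> carrier_mat q q \<and> invertible_mat Q \<and>
                 (\<forall>x. R x \<in> carrier_vec (q - r)) \<and> root_linear R \<and>
                 (\<forall>M \<in> sym_vee_set r n p. F M = (pad_cols q M + root_corr r q R M) * Q))"
  then obtain Q R where "p \<le> q" "Q \<in> carrier_mat q q" "invertible_mat Q"
      "\<forall>x. R x \<in> carrier_vec (q - r)" "root_linear R"
      "\<forall>M \<in> sym_vee_set r n p. F M = (pad_cols q M + root_corr r q R M) * Q" by blast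
  then show "(\<forall>M \<in> sym_vee_set r n p. F M \<in> carrier_mat n q) \<and>
          (\<forall>M \<in> sym_vee_set r n p. \<forall>N \<in> sym_vee_set r n p. F (M + N) = F M + F N) \<and>
          range_preserving_on (sym_vee_set r n p) F"
    using easy_dir[of r n p q Q R F] assms by blast
qed

end
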